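(* Fix $\lambda$ and $\beta\in(0,1)$. Let $r_\lambda(x_1),\ldots,r_\lambda(x_n)$ be i.i.d. real random variables with CDF $F_\lambda$, with $r_\lambda(x)\in[a,b]$ almost surely for some $-\infty<a<b<\infty$, and with $F_\lambda$ continuous and strictly increasing. Let $\psi(p)=\max\{p-\beta,0\}/(1-\beta)$, so that $R_\psi(\lambda)=\int_0^1F_\lambda^{-1}(p)\,d\psi(p)=\operatorname{CVaR}_\beta$ of $F_\lambda$, and let $\hat R_\psi(\lambda)=\sum_{i=1}^n\{\psi(i/n)-\psi((i-1)/n)\}r_{\lambda,(i)}$, where $r_{\lambda,(1)}\le\cdots\le r_{\lambda,(n)}$ are the order statistics. Define $$\hat\sigma^2(\lambda)=\frac{1}{(1-\beta)^2}\,\widehat{\operatorname{Var}}\Big(\big\{\max\{r_\lambda(x_i),\,r_{\lambda,(\lceil n\beta\rceil)}\}\big\}_{i=1}^n\Big),$$ where $\widehat{\operatorname{Var}}$ denotes the sample variance. Then $\sqrt n(\hat R_\psi(\lambda)-R_\psi(\lambda))/\hat\sigma(\lambda)\xrightarrow{d}N(0,1)$ as $n\to\infty$.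
   Context: $F^{-1}(p)=\inf\{x:F(x)\ge p\}$ denotes the $p$-th quantile. $\operatorname{CVaR}_\beta$ (conditional value-at-risk) is the distortion risk with uniform weighting on $[\beta,1]$, i.e. $\frac1{1-\beta}\int_\beta^1F^{-1}(p)\,dp$. *)

theory Defs
  imports "HOL-Probability.Probability"
begin

definition quantile :: "(real \<Rightarrow> real) \<Rightarrow> real \<Rightarrow> real" where
  "quantile F p = Inf {x. F x \<ge> p}"

definition CVaR :: "real \<Rightarrow> (real \<Rightarrow> real) \<Rightarrow> real" where
  "CVaR \<beta> F = (1 / (1 - \<beta>)) * (LBINT p=\<beta>..1. quantile F p)"

definition psi_cvar :: "real \<Rightarrow> real \<Rightarrow> real" where
  "psi_cvar \<beta> p = max (p - \<beta>) 0 / (1 - \<beta>)"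

definition order_stat :: "(nat \<Rightarrow> real) \<Rightarrow> nat \<Rightarrow> nat \<Rightarrow> real" where
  "order_stat x n i = sort (map x [0..<n]) ! (i - 1)"

definition R_hat :: "(real \<Rightarrow> real) \<Rightarrow> (nat \<Rightarrow> real) \<Rightarrow> nat \<Rightarrow> real" where
  "R_hat \<psi> x n = (\<Sum>i=1..n. (\<psi> (real i / real n) - \<psi> (real (i - 1) / real n)) * order_stat x n i)"

definition sample_var :: "(nat \<Rightarrow> real) \<Rightarrow> nat \<Rightarrow> real" where
  "sample_var y n = (\<Sum>i<n. (y i - (\<Sum>j<n. y j) / real n)\<^sup>2) / (real n - 1)"

definition sigma2_hat :: "real \<Rightarrow> (nat \<Rightarrow> real) \<Rightarrow> nat \<Rightarrow> real" where
  "sigma2_hat \<beta> x n =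
     sample_var (\<lambda>i. max (x i) (order_stat x n (nat \<lceil>real n * \<beta>\<rceil>))) n / (1 - \<beta>)\<^sup>2"

end

theory Submission
  imports Defs
begin

lemma count_sort_eq:
  fixes x :: "nat \<Rightarrow> real"
  shows "card {i. i < n \<and> P (x i)} = card {j. j < n \<and> P (sort (map x [0..<n]) ! j)}"
proof -
  let ?xs = "map x [0..<n]"
  have "length (filter P ?xs) = length (filter P (sort ?xs))"
    by (metis mset_filter mset_sort size_mset)
  moreover have "length (filter P ?xs) = card {i. i < n \<and> P (x i)}"
    by (auto simp: length_filter_conv_card intro!: arg_cong[where f=card])
  moreover have "length (filter P (sort ?xs)) = card {j. j < n \<and> P (sort ?xs ! j)}"
    by (simp add: length_filter_conv_card)
  ultimately show ?thesis by simp
qed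

lemma sum_sort_eq:
  fixes x :: "nat \<Rightarrow> real"
  shows "(\<Sum>j<n. f (sort (map x [0..<n]) ! j)) = (\<Sum>i<n. f (x i))"
proof -
  let ?xs = "map x [0..<n]"
  have "(\<Sum>j<n. f (sort ?xs ! j)) = sum_list (map f (sort ?xs))"
    by (simp add: sum_list_sum_nth atLeast0LessThan)
  also have "\<dots> = sum_list (map f ?xs)"
    by (metis mset_map mset_sort sum_mset_sum_list)
  also have "\<dots> = (\<Sum>i<n. f (x i))"
    by (simp add: sum_list_sum_nth atLeast0LessThan)
  finally show ?thesis .
qed

lemma order_stat_le_iff:
  fixes x :: "nat \<Rightarrow> real"
  assumes "1 \<le> k" "k \<le> n"
  shows "order_stat x n k \<le> t \<longleftrightarrow> k \<le> card {i. i < n \<and> x i \<le> t}"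
proof -
  let ?s = "sort (map x [0..<n])"
  have sorted: "sorted ?s" by simp
  have len: "length ?s = n" by simp
  have os: "order_stat x n k = ?s ! (k - 1)" by (simp add: order_stat_def)
  have c: "card {i. i < n \<and> x i \<le> t} = card {j. j < n \<and> ?s ! j \<le> t}"
    by (rule count_sort_eq)
  show ?thesis
  proof
    assume h: "order_stat x n k \<le> t"
    have "{..<k} \<subseteq> {j. j < n \<and> ?s ! j \<le> t}"
    proof
      fix j assume "j \<in> {..<k}"
      then have "j \<le> k - 1" "j < n" using assms by auto
      then have "?s ! j \<le> ?s ! (k - 1)" using sorted len assms
        by (intro sorted_nth_mono) auto
      then show "j \<in> {j. j < n \<and> ?s ! j \<le> t}" using h os \<open>j < n\<close> by auto
    qed
    then have "card {..<k} \<le> card {j. j < n \<and> ?s ! j \<le> t}"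
      by (intro card_mono) auto
    then show "k \<le> card {i. i < n \<and> x i \<le> t}" using c by simp
  next
    assume h: "k \<le> card {i. i < n \<and> x i \<le> t}"
    show "order_stat x n k \<le> t"
    proof (rule ccontr)
      assume "\<not> order_stat x n k \<le> t"
      then have gt: "t < ?s ! (k - 1)" using os by simp
      have "{j. j < n \<and> ?s ! j \<le> t} \<subseteq> {..<k-1}"
      proof
        fix j assume j: "j \<in> {j. j < n \<and> ?s ! j \<le> t}"
        show "j \<in> {..<k-1}"
        proof (rule ccontr)
          assume "j \<notin> {..<k-1}"
          then have "?s ! (k - 1) \<le> ?s ! j" using sorted len j
            by (intro sorted_nth_mono) auto
          then show False using j gt by auto
        qed
      qed
      then have "card {j. j < n \<and> ?s ! j \<le> t} \<le> k - 1"
        by (metis card_lessThan card_mono finite_lessThan)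
      then show False using h c assms by simp
    qed
  qed
qed

lemma order_stat_less_count:
  fixes x :: "nat \<Rightarrow> real"
  assumes "1 \<le> k" "k \<le> n"
  shows "card {i. i < n \<and> x i < order_stat x n k} \<le> k - 1"
proof -
  let ?s = "sort (map x [0..<n])"
  have sorted: "sorted ?s" by simp
  have len: "length ?s = n" by simp
  have os: "order_stat x n k = ?s ! (k - 1)" by (simp add: order_stat_def)
  have c: "card {i. i < n \<and> x i < order_stat x n k} = card {j. j < n \<and> ?s ! j < order_stat x n k}"
    by (rule count_sort_eq)
  have "{j. j < n \<and> ?s ! j < order_stat x n k} \<subseteq> {..<k-1}"
  proof
    fix j assume j: "j \<in> {j. j < n \<and> ?s ! j < order_stat x n k}"
    show "j \<in> {..<k-1}"
    proof (rule ccontr)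
      assume "j \<notin> {..<k-1}"
      then have "?s ! (k - 1) \<le> ?s ! j" using sorted len j
        by (intro sorted_nth_mono) auto
      then show False using j os by auto
    qed
  qed
  then show ?thesis using c
    by (metis card_lessThan card_mono finite_lessThan)
qed

lemma order_stat_ge_count:
  fixes x :: "nat \<Rightarrow> real"
  assumes "1 \<le> k" "k \<le> n"
  shows "card {i. i < n \<and> order_stat x n k < x i} \<le> n - k"
proof -
  have "k \<le> card {i. i < n \<and> x i \<le> order_stat x n k}"
    using order_stat_le_iff[OF assms, of x "order_stat x n k"] by simp
  moreover have "{i. i < n \<and> order_stat x n k < x i} = {..<n} - {i. i < n \<and> x i \<le> order_stat x n k}"
    by auto
  moreover have "card ({..<n} - {i. i < n \<and> x i \<le> order_stat x n k}) = n - card {i. i < n \<and> x i \<le> order_stat x n k}"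
    by (subst card_Diff_subset) auto
  ultimately show ?thesis by simp
qed

lemma sum_telescope1: "(\<Sum>i=1..(n::nat). g i - g (i - 1)) = g n - (g 0 :: real)"
  by (induction n) (auto simp: sum.atLeast_Suc_atMost_Suc_shift)

lemma ceil_facts:
  fixes \<beta> :: real
  assumes "0 < \<beta>" "\<beta> < 1" "1 \<le> n"
  defines "k \<equiv> nat \<lceil>real n * \<beta>\<rceil>"
  shows "1 \<le> k" "k \<le> n" "real n * \<beta> \<le> real k" "real k < real n * \<beta> + 1"
proof -
  have pos: "0 < real n * \<beta>" using assms by simp
  have le: "real n * \<beta> \<le> real n" using assms by simp
  have kk: "real k = of_int \<lceil>real n * \<beta>\<rceil>" unfolding k_def using pos
    by (simp add: order.strict_implies_order)
  show "real n * \<beta> \<le> real k" using kk by linarith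
  show "real k < real n * \<beta> + 1" using kk by linarith
  have "0 < real k" using kk pos by linarith
  then show "1 \<le> k" by simp
  have "\<lceil>real n * \<beta>\<rceil> \<le> int n" by (metis ceiling_le_iff le of_int_of_nat_eq)
  then show "k \<le> n" unfolding k_def by (metis nat_int nat_mono)
qed

lemma rhat_eq:
  fixes \<beta> :: real and x :: "nat \<Rightarrow> real"
  assumes b: "0 < \<beta>" "\<beta> < 1" and n: "1 \<le> n"
  defines "k \<equiv> nat \<lceil>real n * \<beta>\<rceil>"
  defines "t \<equiv> order_stat x n k"
  shows "R_hat (psi_cvar \<beta>) x n = t + (\<Sum>i<n. max (x i - t) 0) / (real n * (1 - \<beta>))"
proof -
  note cf = ceil_facts[OF b n, folded k_def]
  let ?s = "sort (map x [0..<n])"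
  let ?w = "\<lambda>i. psi_cvar \<beta> (real i / real n) - psi_cvar \<beta> (real (i - 1) / real n)"
  define c where "c = 1 / (real n * (1 - \<beta>))"
  have sorted: "sorted ?s" by simp
  have len: "length ?s = n" by simp
  have t: "t = ?s ! (k - 1)" by (simp add: t_def order_stat_def)
  have npos: "0 < real n" using n by simp
  have sw: "(\<Sum>i=1..n. ?w i) = 1"
    using sum_telescope1[of "\<lambda>i. psi_cvar \<beta> (real i / real n)" n] npos b
    by (simp add: psi_cvar_def)
  have step: "?w i * ?s ! (i - 1) = ?w i * t + c * max (?s ! (i - 1) - t) 0"
    if i: "i \<in> {1..n}" for i
  proof (cases "i < k")
    case True
    have "real i \<le> real k - 1" using True by linarith
    then have "real i < real n * \<beta>" using cf by simp
    then have "real i / real n < \<beta>" using npos by (simp add: divide_less_eq mult.commute)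
    moreover have "real (i - 1) / real n \<le> real i / real n"
      by (rule divide_right_mono) (use npos in auto)
    ultimately have "real (i - 1) / real n < \<beta>" by linarith
    with \<open>real i / real n < \<beta>\<close> have w0: "?w i = 0" by (simp add: psi_cvar_def)
    have "?s ! (i - 1) \<le> ?s ! (k - 1)" using sorted len i True cf
      by (intro sorted_nth_mono) auto
    then show ?thesis using w0 t by simp
  next
    case False
    show ?thesis
    proof (cases "i = k")
      case True then show ?thesis using t by simp
    next
      case False
      with \<open>\<not> i < k\<close> have ik: "k < i" by simp
      have "real k \<le> real (i - 1)" using ik by simp
      then have "real n * \<beta> \<le> real (i - 1)" using cf by simp
      then have ge: "\<beta> \<le> real (i - 1) / real n" using npos by (simp add: le_divide_eq mult.commute)
      have i1: "real (i - 1) = real i - 1" using i by simp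
      have "real (i - 1) / real n \<le> real i / real n"
        by (rule divide_right_mono) (use npos in auto)
      with ge have ge2: "\<beta> \<le> real i / real n" by linarith
      have p1: "psi_cvar \<beta> (real i / real n) = (real i / real n - \<beta>) / (1 - \<beta>)"
        using ge2 by (simp add: psi_cvar_def)
      have p2: "psi_cvar \<beta> (real (i - 1) / real n) = (real (i - 1) / real n - \<beta>) / (1 - \<beta>)"
        using ge by (simp add: psi_cvar_def max_def)
      have "?w i = (real i / real n - \<beta>) / (1 - \<beta>) - (real (i - 1) / real n - \<beta>) / (1 - \<beta>)"
        using p1 p2 by simp
      also have "\<dots> = c" unfolding c_def i1 using npos b
        by (simp add: field_simps)
      finally have wc: "?w i = c" .
      have "?s ! (k - 1) \<le> ?s ! (i - 1)" using sorted len i ik cf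
        by (intro sorted_nth_mono) auto
      then show ?thesis using wc t by (simp add: algebra_simps)
    qed
  qed
  have "R_hat (psi_cvar \<beta>) x n = (\<Sum>i=1..n. ?w i * ?s ! (i - 1))"
    by (simp add: R_hat_def order_stat_def)
  also have "\<dots> = (\<Sum>i=1..n. ?w i * t + c * max (?s ! (i - 1) - t) 0)"
    by (rule sum.cong[OF refl]) (erule step)
  also have "\<dots> = (\<Sum>i=1..n. ?w i) * t + c * (\<Sum>i=1..n. max (?s ! (i - 1) - t) 0)"
    by (simp add: sum.distrib sum_distrib_left sum_distrib_right)
  also have "(\<Sum>i=1..n. max (?s ! (i - 1) - t) 0) = (\<Sum>j<n. max (?s ! j - t) 0)"
    by (subst sum_bounds_lt_plus1[symmetric]) simp
  also have "\<dots> = (\<Sum>i<n. max (x i - t) 0)"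
    by (rule sum_sort_eq)
  finally show ?thesis using sw by (simp add: c_def)
qed

definition cip :: "'a measure \<Rightarrow> (nat \<Rightarrow> 'a \<Rightarrow> real) \<Rightarrow> bool" where
  "cip M f \<longleftrightarrow> (\<forall>e>0. \<forall>d>0. eventually (\<lambda>n. measure M {\<omega>\<in>space M. e < \<bar>f n \<omega>\<bar>} \<le> d) sequentially)"

definition bip :: "'a measure \<Rightarrow> (nat \<Rightarrow> 'a \<Rightarrow> real) \<Rightarrow> bool" where
  "bip M f \<longleftrightarrow> (\<forall>d>0. \<exists>K>0. eventually (\<lambda>n. measure M {\<omega>\<in>space M. K < \<bar>f n \<omega>\<bar>} \<le> d) sequentially)"

lemma sq_le_bound: "\<bar>y\<bar> \<le> B \<Longrightarrow> y\<^sup>2 \<le> (B::real)\<^sup>2"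
  using power_mono[of "\<bar>y\<bar>" B 2] by simp

context prob_space
begin

lemma sum_sq_indep:
  fixes Y :: "nat \<Rightarrow> 'a \<Rightarrow> real"
  assumes indep: "indep_vars (\<lambda>_. borel) Y UNIV"
    and meas: "\<And>i. Y i \<in> borel_measurable M"
    and bnd: "\<And>i. AE \<omega> in M. \<bar>Y i \<omega>\<bar> \<le> B"
    and mean0: "\<And>i. expectation (Y i) = 0"
  shows "expectation (\<lambda>\<omega>. (\<Sum>i<n. Y i \<omega>)\<^sup>2) = (\<Sum>i<n. expectation (\<lambda>\<omega>. (Y i \<omega>)\<^sup>2))"
proof -
  have int: "integrable M (Y i)" for i using bnd meas by (intro integrable_const_bound) auto
  have int2: "integrable M (\<lambda>\<omega>. Y i \<omega> * Y j \<omega>)" for i j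
  proof (rule integrable_const_bound[where B="B*B"])
    show "AE x in M. norm (Y i x * Y j x) \<le> B * B"
      using bnd[of i] bnd[of j] by eventually_elim (auto simp: abs_mult intro!: mult_mono)
  qed (use meas in auto)
  have cross: "expectation (\<lambda>\<omega>. Y i \<omega> * Y j \<omega>) = 0" if "i \<noteq> j" for i j
  proof -
    have "indep_vars (\<lambda>_. borel) Y {i,j}" using indep_vars_subset[OF indep] by auto
    then have "(\<integral>\<omega>. (\<Prod>l\<in>{i,j}. Y l \<omega>) \<partial>M) = (\<Prod>l\<in>{i,j}. \<integral>\<omega>. Y l \<omega> \<partial>M)"
      by (intro indep_vars_lebesgue_integral) (auto intro: int)
    then show ?thesis using mean0 that by simp
  qed
  have "expectation (\<lambda>\<omega>. (\<Sum>i<n. Y i \<omega>)\<^sup>2) = expectation (\<lambda>\<omega>. \<Sum>i<n. \<Sum>j<n. Y i \<omega> * Y j \<omega>)"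
    by (simp add: power2_eq_square sum_product)
  also have "\<dots> = (\<Sum>i<n. \<Sum>j<n. expectation (\<lambda>\<omega>. Y i \<omega> * Y j \<omega>))"
    using int2 by (simp add: Bochner_Integration.integral_sum integrable_sum)
  also have "\<dots> = (\<Sum>i<n. \<Sum>j<n. if j = i then expectation (\<lambda>\<omega>. (Y i \<omega>)\<^sup>2) else 0)"
    by (intro sum.cong refl) (auto simp: cross power2_eq_square)
  also have "\<dots> = (\<Sum>i<n. expectation (\<lambda>\<omega>. (Y i \<omega>)\<^sup>2))"
    by simp
  finally show ?thesis .
qed

lemma sum_dev_prob:
  fixes Y :: "nat \<Rightarrow> 'a \<Rightarrow> real"
  assumes indep: "indep_vars (\<lambda>_. borel) Y UNIV"
    and meas: "\<And>i. Y i \<in> borel_measurable M"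
    and bnd: "\<And>i. AE \<omega> in M. \<bar>Y i \<omega>\<bar> \<le> B"
    and mean0: "\<And>i. expectation (Y i) = 0"
    and c: "c > 0"
  shows "prob {\<omega>\<in>space M. c \<le> \<bar>\<Sum>i<n. Y i \<omega>\<bar>} \<le> real n * B\<^sup>2 / c\<^sup>2"
proof -
  have [measurable]: "Y i \<in> borel_measurable M" for i by (rule meas)
  have int: "integrable M (Y i)" for i using bnd meas by (intro integrable_const_bound) auto
  have intsq: "integrable M (\<lambda>\<omega>. (Y i \<omega>)\<^sup>2)" for i
  proof (rule integrable_const_bound[where B="B*B"])
    show "AE x in M. norm ((Y i x)\<^sup>2) \<le> B * B"
      using bnd[of i] by eventually_elim (use sq_le_bound in \<open>auto simp: power2_eq_square\<close>)
  qed (use meas in auto)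
  let ?f = "\<lambda>\<omega>. \<Sum>i<n. Y i \<omega>"
  have Ef: "expectation ?f = 0" using int mean0 by (simp add: Bochner_Integration.integral_sum)
  have intf2: "integrable M (\<lambda>\<omega>. (?f \<omega>)^2)"
  proof (rule integrable_const_bound[where B="(real n * B)^2"])
    show "AE x in M. norm ((?f x)^2) \<le> (real n * B)^2"
    proof -
      have "AE x in M. \<forall>i. \<bar>Y i x\<bar> \<le> B" using bnd by (simp add: AE_all_countable)
      then show ?thesis
      proof eventually_elim
        case (elim x)
        have "\<bar>?f x\<bar> \<le> (\<Sum>i<n. \<bar>Y i x\<bar>)" by (rule sum_abs)
        also have "\<dots> \<le> (\<Sum>i<n. B)" using elim by (intro sum_mono) auto
        finally have "\<bar>?f x\<bar> \<le> real n * B" by simp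
        then show ?case using sq_le_bound by simp
      qed
    qed
  qed simp
  have "prob {\<omega>\<in>space M. \<bar>?f \<omega> - expectation ?f\<bar> \<ge> c} \<le> variance ?f / c\<^sup>2"
    by (rule Chebyshev_inequality) (use intf2 c in auto)
  also have "variance ?f = expectation (\<lambda>\<omega>. (?f \<omega>)\<^sup>2)" using Ef by simp
  also have "\<dots> = (\<Sum>i<n. expectation (\<lambda>\<omega>. (Y i \<omega>)\<^sup>2))"
    by (rule sum_sq_indep[OF indep meas bnd mean0])
  also have "\<dots> \<le> (\<Sum>i<n. B\<^sup>2)"
  proof (rule sum_mono)
    fix i
    have "expectation (\<lambda>\<omega>. (Y i \<omega>)\<^sup>2) \<le> expectation (\<lambda>\<omega>. B\<^sup>2)"
      using bnd[of i] by (intro integral_mono_AE intsq) (auto elim!: eventually_mono simp: sq_le_bound)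
    then show "expectation (\<lambda>\<omega>. (Y i \<omega>)\<^sup>2) \<le> B\<^sup>2" by (simp add: prob_space)
  qed
  finally have "prob {\<omega>\<in>space M. \<bar>?f \<omega> - expectation ?f\<bar> \<ge> c} \<le> (\<Sum>i<n. B\<^sup>2) / c\<^sup>2"
    using c by (simp add: divide_right_mono)
  then show ?thesis using Ef by (simp add: ac_simps)
qed

lemma cip_add:
  assumes [measurable]: "\<And>n. f n \<in> borel_measurable M" "\<And>n. g n \<in> borel_measurable M"
    and "cip M f" "cip M g"
  shows "cip M (\<lambda>n \<omega>. f n \<omega> + g n \<omega>)"
  unfolding cip_def
proof (intro allI impI)
  fix e d :: real assume e: "e > 0" and d: "d > 0"
  have "eventually (\<lambda>n. prob {\<omega>\<in>space M. e/2 < \<bar>f n \<omega>\<bar>} \<le> d/2) sequentially"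
       "eventually (\<lambda>n. prob {\<omega>\<in>space M. e/2 < \<bar>g n \<omega>\<bar>} \<le> d/2) sequentially"
    using assms(3)[unfolded cip_def, rule_format, of "e/2" "d/2"]
      assms(4)[unfolded cip_def, rule_format, of "e/2" "d/2"] e d by auto
  then show "eventually (\<lambda>n. prob {\<omega>\<in>space M. e < \<bar>f n \<omega> + g n \<omega>\<bar>} \<le> d) sequentially"
  proof eventually_elim
    case (elim n)
    have "prob {\<omega>\<in>space M. e < \<bar>f n \<omega> + g n \<omega>\<bar>}
        \<le> prob ({\<omega>\<in>space M. e/2 < \<bar>f n \<omega>\<bar>} \<union> {\<omega>\<in>space M. e/2 < \<bar>g n \<omega>\<bar>})"
      by (rule finite_measure_mono) auto
    also have "\<dots> \<le> prob {\<omega>\<in>space M. e/2 < \<bar>f n \<omega>\<bar>} + prob {\<omega>\<in>space M. e/2 < \<bar>g n \<omega>\<bar>}"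
      by (rule measure_Un_le) auto
    finally show ?case using elim by simp
  qed
qed

lemma cip_cmult:
  assumes "cip M f"
  shows "cip M (\<lambda>n \<omega>. c * f n \<omega>)"
  unfolding cip_def
proof (intro allI impI)
  fix e d :: real assume e: "e > 0" and d: "d > 0"
  show "eventually (\<lambda>n. prob {\<omega>\<in>space M. e < \<bar>c * f n \<omega>\<bar>} \<le> d) sequentially"
  proof (cases "c = 0")
    case True then show ?thesis using e d by simp
  next
    case False
    then have "eventually (\<lambda>n. prob {\<omega>\<in>space M. e / \<bar>c\<bar> < \<bar>f n \<omega>\<bar>} \<le> d) sequentially"
      using assms e d unfolding cip_def by auto
    moreover have "{\<omega>\<in>space M. e < \<bar>c * f n \<omega>\<bar>} = {\<omega>\<in>space M. e / \<bar>c\<bar> < \<bar>f n \<omega>\<bar>}" for n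
      using False by (auto simp: abs_mult divide_less_eq mult.commute)
    ultimately show ?thesis by simp
  qed
qed

lemma cip_dom:
  assumes [measurable]: "\<And>n. g n \<in> borel_measurable M"
    and dom: "eventually (\<lambda>n. AE \<omega> in M. \<bar>f n \<omega>\<bar> \<le> \<bar>g n \<omega>\<bar>) sequentially"
    and "cip M g"
  shows "cip M f"
  unfolding cip_def
proof (intro allI impI)
  fix e d :: real assume e: "e > 0" and d: "d > 0"
  have "eventually (\<lambda>n. prob {\<omega>\<in>space M. e < \<bar>g n \<omega>\<bar>} \<le> d) sequentially"
    using assms(3) e d unfolding cip_def by auto
  with dom show "eventually (\<lambda>n. prob {\<omega>\<in>space M. e < \<bar>f n \<omega>\<bar>} \<le> d) sequentially"
  proof eventually_elim
    case (elim n)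
    have "prob {\<omega>\<in>space M. e < \<bar>f n \<omega>\<bar>} \<le> prob {\<omega>\<in>space M. e < \<bar>g n \<omega>\<bar>}"
      by (rule finite_measure_mono_AE) (use elim(1) in \<open>auto elim!: eventually_mono\<close>)
    then show ?case using elim by simp
  qed
qed

lemma bip_dom:
  assumes [measurable]: "\<And>n. g n \<in> borel_measurable M"
    and dom: "eventually (\<lambda>n. AE \<omega> in M. \<bar>f n \<omega>\<bar> \<le> \<bar>g n \<omega>\<bar>) sequentially"
    and "bip M g"
  shows "bip M f"
  unfolding bip_def
proof (intro allI impI)
  fix d :: real assume d: "d > 0"
  obtain K where K: "K > 0" "eventually (\<lambda>n. prob {\<omega>\<in>space M. K < \<bar>g n \<omega>\<bar>} \<le> d) sequentially"
    using assms(3) d unfolding bip_def by auto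
  from K(2) dom have "eventually (\<lambda>n. prob {\<omega>\<in>space M. K < \<bar>f n \<omega>\<bar>} \<le> d) sequentially"
  proof eventually_elim
    case (elim n)
    have "prob {\<omega>\<in>space M. K < \<bar>f n \<omega>\<bar>} \<le> prob {\<omega>\<in>space M. K < \<bar>g n \<omega>\<bar>}"
      by (rule finite_measure_mono_AE) (use elim(2) in \<open>auto elim!: eventually_mono\<close>)
    then show ?case using elim by simp
  qed
  then show "\<exists>K>0. eventually (\<lambda>n. prob {\<omega>\<in>space M. K < \<bar>f n \<omega>\<bar>} \<le> d) sequentially"
    using K(1) by blast
qed

lemma cip_det:
  assumes "c \<longlonglongrightarrow> 0"
  shows "cip M (\<lambda>n \<omega>. c n)"
  unfolding cip_def
proof (intro allI impI)
  fix e d :: real assume e: "e > 0" and d: "d > 0"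
  have "eventually (\<lambda>n. \<bar>c n\<bar> < e) sequentially"
    using assms e by (metis (mono_tags, lifting) eventually_mono order_tendstoD(2) tendsto_rabs_zero)
  then show "eventually (\<lambda>n. prob {\<omega>\<in>space M. e < \<bar>c n\<bar>} \<le> d) sequentially"
    by eventually_elim (use d in auto)
qed

lemma cip_bip:
  assumes "cip M f" shows "bip M f"
  using assms unfolding cip_def bip_def by (meson zero_less_one)

lemma cip_mult:
  assumes [measurable]: "\<And>n. f n \<in> borel_measurable M" "\<And>n. g n \<in> borel_measurable M"
    and "bip M f" "cip M g"
  shows "cip M (\<lambda>n \<omega>. f n \<omega> * g n \<omega>)"
  unfolding cip_def
proof (intro allI impI)
  fix e d :: real assume e: "e > 0" and d: "d > 0"
  obtain K where K: "K > 0" "eventually (\<lambda>n. prob {\<omega>\<in>space M. K < \<bar>f n \<omega>\<bar>} \<le> d/2) sequentially"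
    using assms(3) d unfolding bip_def by (meson half_gt_zero)
  have "eventually (\<lambda>n. prob {\<omega>\<in>space M. e/K < \<bar>g n \<omega>\<bar>} \<le> d/2) sequentially"
    using assms(4)[unfolded cip_def, rule_format, of "e/K" "d/2"] e d K(1) by auto
  with K(2) show "eventually (\<lambda>n. prob {\<omega>\<in>space M. e < \<bar>f n \<omega> * g n \<omega>\<bar>} \<le> d) sequentially"
  proof eventually_elim
    case (elim n)
    have sub: "{\<omega>\<in>space M. e < \<bar>f n \<omega> * g n \<omega>\<bar>} \<subseteq> {\<omega>\<in>space M. K < \<bar>f n \<omega>\<bar>} \<union> {\<omega>\<in>space M. e/K < \<bar>g n \<omega>\<bar>}"
    proof
      fix \<omega> assume h: "\<omega> \<in> {\<omega>\<in>space M. e < \<bar>f n \<omega> * g n \<omega>\<bar>}"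
      show "\<omega> \<in> {\<omega>\<in>space M. K < \<bar>f n \<omega>\<bar>} \<union> {\<omega>\<in>space M. e/K < \<bar>g n \<omega>\<bar>}"
      proof (cases "K < \<bar>f n \<omega>\<bar>")
        case True then show ?thesis using h by auto
      next
        case False
        then have "\<bar>f n \<omega>\<bar> \<le> K" by simp
        then have "\<bar>f n \<omega> * g n \<omega>\<bar> \<le> K * \<bar>g n \<omega>\<bar>"
          by (simp add: abs_mult mult_right_mono)
        then have "e < K * \<bar>g n \<omega>\<bar>" using h by auto
        then have "e / K < \<bar>g n \<omega>\<bar>" using K(1) by (simp add: divide_less_eq mult.commute)
        then show ?thesis using h by auto
      qed
    qed
    have "prob {\<omega>\<in>space M. e < \<bar>f n \<omega> * g n \<omega>\<bar>}
        \<le> prob ({\<omega>\<in>space M. K < \<bar>f n \<omega>\<bar>} \<union> {\<omega>\<in>space M. e/K < \<bar>g n \<omega>\<bar>})"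
      by (rule finite_measure_mono[OF sub]) auto
    also have "\<dots> \<le> prob {\<omega>\<in>space M. K < \<bar>f n \<omega>\<bar>} + prob {\<omega>\<in>space M. e/K < \<bar>g n \<omega>\<bar>}"
      by (rule measure_Un_le) auto
    finally show ?case using elim by simp
  qed
qed

lemma bip_add:
  assumes [measurable]: "\<And>n. f n \<in> borel_measurable M" "\<And>n. g n \<in> borel_measurable M"
    and "bip M f" "bip M g"
  shows "bip M (\<lambda>n \<omega>. f n \<omega> + g n \<omega>)"
  unfolding bip_def
proof (intro allI impI)
  fix d :: real assume d: "d > 0"
  obtain K1 where K1: "K1 > 0" "eventually (\<lambda>n. prob {\<omega>\<in>space M. K1 < \<bar>f n \<omega>\<bar>} \<le> d/2) sequentially"
    using assms(3) d unfolding bip_def by (meson half_gt_zero)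
  obtain K2 where K2: "K2 > 0" "eventually (\<lambda>n. prob {\<omega>\<in>space M. K2 < \<bar>g n \<omega>\<bar>} \<le> d/2) sequentially"
    using assms(4) d unfolding bip_def by (meson half_gt_zero)
  from K1(2) K2(2) have "eventually (\<lambda>n. prob {\<omega>\<in>space M. K1 + K2 < \<bar>f n \<omega> + g n \<omega>\<bar>} \<le> d) sequentially"
  proof eventually_elim
    case (elim n)
    have "prob {\<omega>\<in>space M. K1 + K2 < \<bar>f n \<omega> + g n \<omega>\<bar>}
        \<le> prob ({\<omega>\<in>space M. K1 < \<bar>f n \<omega>\<bar>} \<union> {\<omega>\<in>space M. K2 < \<bar>g n \<omega>\<bar>})"
      by (rule finite_measure_mono) auto
    also have "\<dots> \<le> prob {\<omega>\<in>space M. K1 < \<bar>f n \<omega>\<bar>} + prob {\<omega>\<in>space M. K2 < \<bar>g n \<omega>\<bar>}"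
      by (rule measure_Un_le) auto
    finally show ?case using elim by simp
  qed
  then show "\<exists>K>0. eventually (\<lambda>n. prob {\<omega>\<in>space M. K < \<bar>f n \<omega> + g n \<omega>\<bar>} \<le> d) sequentially"
    using K1(1) K2(1) by (intro exI[of _ "K1 + K2"]) auto
qed

end

lemma std_normal_isCont: "isCont (cdf std_normal_distribution) x"
proof -
  interpret real_distribution std_normal_distribution by (rule real_dist_normal_dist)
  have "emeasure std_normal_distribution {x} = 0"
    apply (subst emeasure_density)
      apply auto[2]
    apply (rule nn_integral_zero')
    using AE_lborel_singleton[of x] by (auto elim!: eventually_mono)
  then have "measure std_normal_distribution {x} = 0" by (simp add: measure_def)
  then show ?thesis by (simp add: isCont_cdf)
qed

lemma count_sum: "real (card {i. i < (n::nat) \<and> P i}) = (\<Sum>i<n. if P i then 1 else 0)"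
proof (induction n)
  case 0 then show ?case by simp
next
  case (Suc n)
  have eq: "{i. i < Suc n \<and> P i} = (if P n then insert n {i. i < n \<and> P i} else {i. i < n \<and> P i})"
    by (auto simp: less_Suc_eq)
  show ?case using Suc by (simp add: eq)
qed

lemma H_L1:
  fixes x :: "nat \<Rightarrow> real"
  assumes "t \<le> s"
  shows "(\<Sum>i<n. max (x i - s) 0) \<ge> (\<Sum>i<n. max (x i - t) 0) - (s - t) * real (card {i. i < n \<and> t < x i})"
proof -
  have "(\<Sum>i<n. max (x i - t) 0) - (s - t) * real (card {i. i < n \<and> t < x i})
      = (\<Sum>i<n. max (x i - t) 0 - (s - t) * (if t < x i then 1 else 0))"
    by (simp add: count_sum sum_subtractf sum_distrib_left)
  also have "\<dots> \<le> (\<Sum>i<n. max (x i - s) 0)"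
    by (intro sum_mono) (use assms in auto)
  finally show ?thesis by simp
qed

lemma H_L2:
  fixes x :: "nat \<Rightarrow> real"
  assumes "s \<le> t"
  shows "(\<Sum>i<n. max (x i - s) 0) \<ge> (\<Sum>i<n. max (x i - t) 0) + (t - s) * real (card {i. i < n \<and> t \<le> x i})"
proof -
  have "(\<Sum>i<n. max (x i - t) 0) + (t - s) * real (card {i. i < n \<and> t \<le> x i})
      = (\<Sum>i<n. max (x i - t) 0 + (t - s) * (if t \<le> x i then 1 else 0))"
    by (simp add: count_sum sum.distrib sum_distrib_left)
  also have "\<dots> \<le> (\<Sum>i<n. max (x i - s) 0)"
    by (intro sum_mono) (use assms in auto)
  finally show ?thesis by simp
qed

lemma card_le_ge_split:
  fixes x :: "nat \<Rightarrow> real"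
  shows "card {i. i < n \<and> t \<le> x i} = n - card {i. i < n \<and> x i < t}"
proof -
  have e: "{i. i < n \<and> t \<le> x i} = {..<n} - {i. i < n \<and> x i < t}" by auto
  have "card {i. i < n \<and> t \<le> x i} = card ({..<n} - {i. i < n \<and> x i < t})" by (simp only: e)
  also have "\<dots> = card {..<n} - card {i. i < n \<and> x i < t}" by (rule card_Diff_subset) auto
  finally show ?thesis by simp
qed

lemma Gdiff:
  fixes x :: "nat \<Rightarrow> real" and \<beta> q :: real
  assumes b: "0 < \<beta>" "\<beta> < 1" and n: "1 \<le> n"
  defines "k \<equiv> nat \<lceil>real n * \<beta>\<rceil>"
  defines "t \<equiv> order_stat x n k"
  defines "c \<equiv> 1 / (real n * (1 - \<beta>))"
  defines "G \<equiv> (\<lambda>s. s + c * (\<Sum>i<n. max (x i - s) 0))"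
  shows "0 \<le> G q - G t"
    and "G q - G t \<le> \<bar>t - q\<bar> * (\<bar>1 - c * real (card {i. i < n \<and> q < x i})\<bar>
                                 + \<bar>1 - c * real (card {i. i < n \<and> q \<le> x i})\<bar>)"
proof -
  note cf = ceil_facts[OF b n, folded k_def]
  have npos: "0 < real n" using n by simp
  have cpos: "0 < c" unfolding c_def using npos b by simp
  have cn: "c * (real n * (1 - \<beta>)) = 1" unfolding c_def using npos b by simp
  let ?H = "\<lambda>s. \<Sum>i<n. max (x i - s) 0"
  show "0 \<le> G q - G t"
  proof (cases "t \<le> q")
    case True
    have L: "?H q \<ge> ?H t - (q - t) * real (card {i. i < n \<and> t < x i})"
      by (rule H_L1[OF True])
    have cnt: "card {i. i < n \<and> t < x i} \<le> n - k"
      unfolding t_def by (rule order_stat_ge_count[OF cf(1,2)])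
    have "real (card {i. i < n \<and> t < x i}) \<le> real (n - k)"
      using cnt by (simp only: of_nat_le_iff)
    also have "real (n - k) = real n - real k" using cf(2) by (rule of_nat_diff)
    also have "\<dots> \<le> real n * (1 - \<beta>)" using cf(3) by (simp add: right_diff_distrib)
    finally have "c * real (card {i. i < n \<and> t < x i}) \<le> c * (real n * (1 - \<beta>))"
      using cpos by (intro mult_left_mono) auto
    then have "c * real (card {i. i < n \<and> t < x i}) \<le> 1" using cn by simp
    then have "0 \<le> (q - t) * (1 - c * real (card {i. i < n \<and> t < x i}))"
      using True by simp
    also have "\<dots> \<le> G q - G t"
    proof -
      have "c * (?H t - (q - t) * real (card {i. i < n \<and> t < x i})) \<le> c * ?H q"
        using L cpos by (intro mult_left_mono) auto
      moreover have "c * (?H t - (q - t) * real (card {i. i < n \<and> t < x i}))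
          = c * ?H t - c * ((q - t) * real (card {i. i < n \<and> t < x i}))" by (simp add: algebra_simps)
      moreover have "(q - t) * (1 - c * real (card {i. i < n \<and> t < x i}))
          = (q - t) - c * ((q - t) * real (card {i. i < n \<and> t < x i}))" by (simp add: algebra_simps)
      ultimately show ?thesis unfolding G_def by linarith
    qed
    finally show ?thesis .
  next
    case False
    then have qt: "q \<le> t" by simp
    have L: "?H q \<ge> ?H t + (t - q) * real (card {i. i < n \<and> t \<le> x i})"
      by (rule H_L2[OF qt])
    have cnt: "card {i. i < n \<and> x i < t} \<le> k - 1"
      unfolding t_def by (rule order_stat_less_count[OF cf(1,2)])
    have "real n * (1 - \<beta>) \<le> real n - (real k - 1)" using cf(4) by (simp add: right_diff_distrib)
    also have "\<dots> \<le> real (card {i. i < n \<and> t \<le> x i})"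
    proof -
      have sub: "{i. i < n \<and> x i < t} \<subseteq> {..<n}" by auto
      have cle: "card {i. i < n \<and> x i < t} \<le> n"
        using card_mono[OF finite_lessThan sub] by simp
      have "real (card {i. i < n \<and> t \<le> x i}) = real (n - card {i. i < n \<and> x i < t})"
        by (simp only: card_le_ge_split)
      also have "\<dots> = real n - real (card {i. i < n \<and> x i < t})" using cle by (rule of_nat_diff)
      finally have e1: "real (card {i. i < n \<and> t \<le> x i}) = real n - real (card {i. i < n \<and> x i < t})" .
      have "real (card {i. i < n \<and> x i < t}) \<le> real (k - 1)" using cnt by (simp only: of_nat_le_iff)
      also have "real (k - 1) = real k - 1" using cf(1) by (simp add: of_nat_diff)
      finally show ?thesis using e1 by linarith
    qed
    finally have "c * (real n * (1 - \<beta>)) \<le> c * real (card {i. i < n \<and> t \<le> x i})"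
      using cpos by (intro mult_left_mono) auto
    then have "1 \<le> c * real (card {i. i < n \<and> t \<le> x i})" using cn by simp
    then have "0 \<le> (t - q) * (c * real (card {i. i < n \<and> t \<le> x i}) - 1)"
      using qt by simp
    also have "\<dots> \<le> G q - G t"
    proof -
      have "c * (?H t + (t - q) * real (card {i. i < n \<and> t \<le> x i})) \<le> c * ?H q"
        using L cpos by (intro mult_left_mono) auto
      moreover have "c * (?H t + (t - q) * real (card {i. i < n \<and> t \<le> x i}))
          = c * ?H t + c * ((t - q) * real (card {i. i < n \<and> t \<le> x i}))" by (simp add: algebra_simps)
      moreover have "(t - q) * (c * real (card {i. i < n \<and> t \<le> x i}) - 1)
          = c * ((t - q) * real (card {i. i < n \<and> t \<le> x i})) - (t - q)" by (simp add: algebra_simps)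
      ultimately show ?thesis unfolding G_def by linarith
    qed
    finally show ?thesis .
  qed
  let ?Ng = "real (card {i. i < n \<and> q < x i})"
  let ?Nge = "real (card {i. i < n \<and> q \<le> x i})"
  show "G q - G t \<le> \<bar>t - q\<bar> * (\<bar>1 - c * ?Ng\<bar> + \<bar>1 - c * ?Nge\<bar>)"
  proof (cases "q \<le> t")
    case True
    have L: "?H t \<ge> ?H q - (t - q) * ?Ng"
      by (rule H_L1[OF True])
    have "G q - G t \<le> (t - q) * (c * ?Ng - 1)"
    proof -
      have "c * (?H q - (t - q) * ?Ng) \<le> c * ?H t"
        using L cpos by (intro mult_left_mono) auto
      moreover have "c * (?H q - (t - q) * ?Ng) = c * ?H q - c * ((t - q) * ?Ng)" by (simp add: algebra_simps)
      moreover have "(t - q) * (c * ?Ng - 1) = c * ((t - q) * ?Ng) - (t - q)" by (simp add: algebra_simps)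
      ultimately show ?thesis unfolding G_def by linarith
    qed
    also have "\<dots> \<le> \<bar>(t - q) * (c * ?Ng - 1)\<bar>" by (rule abs_ge_self)
    also have "\<dots> = \<bar>t - q\<bar> * \<bar>1 - c * ?Ng\<bar>" by (simp add: abs_mult abs_minus_commute)
    also have "\<dots> \<le> \<bar>t - q\<bar> * (\<bar>1 - c * ?Ng\<bar> + \<bar>1 - c * ?Nge\<bar>)"
      by (intro mult_left_mono) auto
    finally show ?thesis .
  next
    case False
    then have tq: "t \<le> q" by simp
    have L: "?H t \<ge> ?H q + (q - t) * ?Nge"
      by (rule H_L2[OF tq])
    have "G q - G t \<le> (q - t) * (1 - c * ?Nge)"
    proof -
      have "c * (?H q + (q - t) * ?Nge) \<le> c * ?H t"
        using L cpos by (intro mult_left_mono) auto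
      moreover have "c * (?H q + (q - t) * ?Nge) = c * ?H q + c * ((q - t) * ?Nge)" by (simp add: algebra_simps)
      moreover have "(q - t) * (1 - c * ?Nge) = (q - t) - c * ((q - t) * ?Nge)" by (simp add: algebra_simps)
      ultimately show ?thesis unfolding G_def by linarith
    qed
    also have "\<dots> \<le> \<bar>(q - t) * (1 - c * ?Nge)\<bar>" by (rule abs_ge_self)
    also have "\<dots> = \<bar>t - q\<bar> * \<bar>1 - c * ?Nge\<bar>" by (simp add: abs_mult abs_minus_commute)
    also have "\<dots> \<le> \<bar>t - q\<bar> * (\<bar>1 - c * ?Ng\<bar> + \<bar>1 - c * ?Nge\<bar>)"
      by (intro mult_left_mono) auto
    finally show ?thesis .
  qed
qed

locale cvar_setup = prob_space M for M :: "'s measure" +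
  fixes X :: "nat \<Rightarrow> 's \<Rightarrow> real" and \<beta> a b :: real
  assumes beta: "0 < \<beta>" "\<beta> < 1"
    and meas[measurable]: "\<And>i. X i \<in> borel_measurable M"
    and indep: "indep_vars (\<lambda>_. borel) X UNIV"
    and ident: "\<And>i. distr M borel (X i) = distr M borel (X 0)"
    and ab: "a < b" "AE \<omega> in M. X 0 \<omega> \<in> {a..b}"
    and cont: "continuous_on UNIV (cdf (distr M borel (X 0)))"
    and strict: "strict_mono_on {x. 0 < cdf (distr M borel (X 0)) x \<and> cdf (distr M borel (X 0)) x < 1}
                   (cdf (distr M borel (X 0)))"
begin

abbreviation "\<mu> \<equiv> distr M borel (X 0)"
abbreviation "F \<equiv> cdf \<mu>"

lemma rd: "real_distribution \<mu>" by simp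

lemma psmu: "prob_space \<mu>" by (rule prob_space_distr) simp

lemma fbm: "finite_borel_measure \<mu>" by (rule real_distribution.finite_borel_measure_M[OF rd])

lemma space_mu[simp]: "space \<mu> = UNIV" by simp

lemma AE_mu: "AE x in \<mu>. x \<in> {a..b}"
  using ab(2) by (subst AE_distr_iff) auto

lemma AE_X: "AE \<omega> in M. X i \<omega> \<in> {a..b}"
proof -
  have "AE x in distr M borel (X i). x \<in> {a..b}" unfolding ident[of i] by (rule AE_mu)
  then show ?thesis by (subst (asm) AE_distr_iff) auto
qed

lemma AE_Xall: "AE \<omega> in M. \<forall>i. X i \<omega> \<in> {a..b}"
  using AE_X by (simp add: AE_all_countable)

lemma exp_X:
  fixes g :: "real \<Rightarrow> real"
  assumes [measurable]: "g \<in> borel_measurable borel"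
  shows "expectation (\<lambda>\<omega>. g (X i \<omega>)) = integral\<^sup>L \<mu> g"
proof -
  have "integral\<^sup>L (distr M borel (X i)) g = expectation (\<lambda>\<omega>. g (X i \<omega>))"
    by (subst integral_distr) auto
  then show ?thesis using ident[of i] by simp
qed

lemma F_mono: "x \<le> y \<Longrightarrow> F x \<le> F y"
  by (rule finite_borel_measure.cdf_nondecreasing[OF fbm])

lemma F_isCont: "isCont F x"
  using cont by (simp add: continuous_on_eq_continuous_at)

lemma mu_single: "measure \<mu> {x} = 0"
  using F_isCont[of x] finite_borel_measure.isCont_cdf[OF fbm] by simp

lemma q_exists: "\<exists>q. F q = \<beta>"
proof -
  have "(F \<longlongrightarrow> 0) at_bot" by (rule finite_borel_measure.cdf_lim_at_bot[OF fbm])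
  then have "eventually (\<lambda>x. F x < \<beta>) at_bot" using beta by (intro order_tendstoD(2)) auto
  then obtain u where u: "F u < \<beta>" by (metis eventually_at_bot_linorder order_refl)
  have "(F \<longlongrightarrow> 1) at_top" by (rule real_distribution.cdf_lim_at_top_prob[OF rd])
  then have "eventually (\<lambda>x. \<beta> < F x) at_top" using beta by (intro order_tendstoD(1)) auto
  then obtain v where v: "\<beta> < F v" by (metis eventually_at_top_linorder order_refl)
  have uv: "u \<le> v"
  proof (rule ccontr)
    assume "\<not> u \<le> v" then have "F v \<le> F u" by (intro F_mono) simp
    then show False using u v by simp
  qed
  have "continuous_on {u..v} F" using cont by (rule continuous_on_subset) simp
  then show ?thesis using IVT'[of F u \<beta> v] u v uv by auto
qed

definition q where "q = (SOME q. F q = \<beta>)"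

lemma Fq: "F q = \<beta>"
  unfolding q_def using q_exists by (rule someI_ex)

lemma F_gt: assumes "0 < e" shows "\<beta> < F (q + e)"
proof (rule ccontr)
  assume "\<not> \<beta> < F (q + e)"
  moreover have "F q \<le> F (q + e)" using assms by (intro F_mono) simp
  ultimately have eq: "F (q + e) = \<beta>" using Fq by simp
  have "F q < F (q + e)"
    using strict Fq eq beta assms by (intro strict_mono_onD[OF strict]) auto
  then show False using Fq eq by simp
qed

lemma F_lt: assumes "0 < e" shows "F (q - e) < \<beta>"
proof (rule ccontr)
  assume "\<not> F (q - e) < \<beta>"
  moreover have "F (q - e) \<le> F q" using assms by (intro F_mono) simp
  ultimately have eq: "F (q - e) = \<beta>" using Fq by simp
  have "F (q - e) < F q"
    using strict Fq eq beta assms by (intro strict_mono_onD[OF strict]) auto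
  then show False using Fq eq by simp
qed

lemma mu_le: "measure \<mu> {..t} = F t"
  by (simp add: cdf_def)

lemma mu_gt: "measure \<mu> {q<..} = 1 - \<beta>"
proof -
  interpret P: prob_space \<mu> by (rule psmu)
  have "measure \<mu> (space \<mu> - {..q}) = 1 - measure \<mu> {..q}"
    by (rule P.prob_compl) simp
  moreover have "space \<mu> - {..q} = {q<..}" by auto
  ultimately show ?thesis using Fq by (simp add: mu_le)
qed

lemma mu_ge: "measure \<mu> {q..} = 1 - \<beta>"
proof -
  interpret P: prob_space \<mu> by (rule psmu)
  have "measure \<mu> {q..} \<le> measure \<mu> ({q<..} \<union> {q})"
    by (rule P.finite_measure_mono) auto
  also have "\<dots> \<le> measure \<mu> {q<..} + measure \<mu> {q}"
    by (rule measure_Un_le) auto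
  finally have 1: "measure \<mu> {q..} \<le> 1 - \<beta>" using mu_gt mu_single by simp
  have "measure \<mu> {q<..} \<le> measure \<mu> {q..}"
    by (rule P.finite_measure_mono) auto
  then show ?thesis using 1 mu_gt by simp
qed

definition m where "m = integral\<^sup>L \<mu> (\<lambda>x. max (x - q) 0)"
definition v where "v = integral\<^sup>L \<mu> (\<lambda>x. (max (x - q) 0 - m)\<^sup>2)"

lemma int_mu_bound:
  fixes B :: real
  assumes [measurable]: "g \<in> borel_measurable borel" and "AE x in \<mu>. \<bar>g x\<bar> \<le> B"
  shows "integrable \<mu> g"
proof -
  interpret P: prob_space \<mu> by (rule psmu)
  show ?thesis using assms by (intro P.integrable_const_bound[where B=B]) auto
qed

lemma CVaR_eq: "CVaR \<beta> F = q + m / (1 - \<beta>)"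
proof -
  interpret cd: cdf_distribution \<mu> using rd by (simp add: cdf_distribution_def)
  interpret P: prob_space \<mu> by (rule psmu)
  let ?h = "\<lambda>x. x * indicator {q<..} x"
  have hm[measurable]: "?h \<in> borel_measurable borel" by measurable
  have int_h: "integrable \<mu> ?h"
  proof (rule int_mu_bound[where B="\<bar>a\<bar> + \<bar>b\<bar>"])
    show "AE x in \<mu>. \<bar>?h x\<bar> \<le> \<bar>a\<bar> + \<bar>b\<bar>"
      using AE_mu by eventually_elim (auto simp: indicator_def)
  qed simp
  have "integral\<^sup>L \<mu> ?h = integral\<^sup>L (distr (restrict_space lborel {0<..<1::real}) borel cd.I) ?h"
    using cd.distr_I_eq_M by simp
  also have "\<dots> = integral\<^sup>L (restrict_space lborel {0<..<1::real}) (\<lambda>p. ?h (cd.I p))"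
    by (rule integral_distr) auto
  also have "\<dots> = integral\<^sup>L lborel (\<lambda>p. indicator {0<..<1::real} p *\<^sub>R ?h (cd.I p))"
    by (rule integral_restrict_space) auto
  also have "\<dots> = integral\<^sup>L lborel (\<lambda>p. indicator {\<beta><..<1} p *\<^sub>R quantile F p)"
  proof (rule Bochner_Integration.integral_cong[OF refl])
    fix p :: real
    show "indicator {0<..<1::real} p *\<^sub>R ?h (cd.I p) = indicator {\<beta><..<1} p *\<^sub>R quantile F p"
    proof (cases "p \<in> {0<..<1}")
      case True
      have "p \<le> F q \<longleftrightarrow> cd.I p \<le> q" using True by (intro cd.pseudoinverse) auto
      then have "q < cd.I p \<longleftrightarrow> \<beta> < p" using Fq by auto
      moreover have "cd.I p = quantile F p" by (simp add: quantile_def)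
      ultimately show ?thesis using True by (auto simp: indicator_def)
    next
      case False
      then have "p \<notin> {\<beta><..<1}" using beta by auto
      then show ?thesis using False by simp
    qed
  qed
  also have "\<dots> = (LBINT p=\<beta>..1. quantile F p)"
    using beta by (simp add: interval_integral_Ioo set_lebesgue_integral_def)
  finally have LB: "(LBINT p=\<beta>..1. quantile F p) = integral\<^sup>L \<mu> ?h" by simp
  have "m = integral\<^sup>L \<mu> (\<lambda>x. ?h x - q * indicator {q<..} x)"
    unfolding m_def by (intro Bochner_Integration.integral_cong) (auto simp: indicator_def)
  also have "\<dots> = integral\<^sup>L \<mu> ?h - q * measure \<mu> {q<..}"
  proof -
    have "integrable \<mu> (\<lambda>x. q * indicator {q<..} x)"
      by (rule int_mu_bound[where B="\<bar>q\<bar>"]) (auto simp: indicator_def)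
    then show ?thesis using int_h by (subst Bochner_Integration.integral_diff) auto
  qed
  finally have "m = integral\<^sup>L \<mu> ?h - q * (1 - \<beta>)" using mu_gt by simp
  then show ?thesis unfolding CVaR_def LB using beta by (simp add: field_simps)
qed

end

context cvar_setup
begin

lemma dev_prob:
  fixes g :: "real \<Rightarrow> real" and B c :: real
  assumes g[measurable]: "g \<in> borel_measurable borel"
    and gb: "AE x in \<mu>. \<bar>g x - integral\<^sup>L \<mu> g\<bar> \<le> B" and c: "0 < c"
  shows "prob {\<omega>\<in>space M. c \<le> \<bar>\<Sum>i<n. (g (X i \<omega>) - integral\<^sup>L \<mu> g)\<bar>} \<le> real n * B\<^sup>2 / c\<^sup>2"
proof -
  define mg where "mg = integral\<^sup>L \<mu> g"
  let ?Y = "\<lambda>i \<omega>. g (X i \<omega>) - mg"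
  have bndmu: "AE x in \<mu>. \<bar>g x\<bar> \<le> B + \<bar>mg\<bar>" using gb[folded mg_def] by eventually_elim auto
  have intg: "integrable \<mu> g" by (rule int_mu_bound[OF g bndmu])
  have Ymeas: "?Y i \<in> borel_measurable M" for i by measurable
  have ind: "indep_vars (\<lambda>_. borel) ?Y UNIV"
    using indep_vars_compose2[OF indep, of "\<lambda>i x. g x - mg" "\<lambda>_. borel"] by simp
  have bnd: "AE \<omega> in M. \<bar>?Y i \<omega>\<bar> \<le> B" for i
  proof -
    have "AE x in distr M borel (X i). \<bar>g x - mg\<bar> \<le> B" unfolding ident[of i] using gb mg_def by simp
    then show ?thesis by (subst (asm) AE_distr_iff) auto
  qed
  have mean0: "expectation (?Y i) = 0" for i
  proof -
    have "expectation (?Y i) = integral\<^sup>L \<mu> (\<lambda>x. g x - mg)"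
      using exp_X[of "\<lambda>x. g x - mg" i] by simp
    also have "\<dots> = mg - mg"
    proof -
      have mu1: "measure \<mu> UNIV = 1" using prob_space.prob_space[OF psmu] by simp
      have ic: "integrable \<mu> (\<lambda>x. mg)" by (rule int_mu_bound[where B="\<bar>mg\<bar>"]) auto
      show ?thesis using intg ic mu1 unfolding mg_def
        by (subst Bochner_Integration.integral_diff) auto
    qed
    finally show ?thesis by simp
  qed
  show ?thesis unfolding mg_def[symmetric] by (rule sum_dev_prob[OF ind Ymeas bnd mean0 c])
qed

lemma dev_cip:
  fixes g :: "real \<Rightarrow> real" and B :: real
  assumes g[measurable]: "g \<in> borel_measurable borel"
    and gb: "AE x in \<mu>. \<bar>g x - integral\<^sup>L \<mu> g\<bar> \<le> B"
  shows "cip M (\<lambda>n \<omega>. (\<Sum>i<n. (g (X i \<omega>) - integral\<^sup>L \<mu> g)) / real n)"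
  unfolding cip_def
proof (intro allI impI)
  fix e d :: real assume e: "0 < e" and d: "0 < d"
  define N where "N = nat \<lceil>B\<^sup>2 / (e\<^sup>2 * d)\<rceil> + 1"
  let ?S = "\<lambda>n \<omega>. \<Sum>i<n. (g (X i \<omega>) - integral\<^sup>L \<mu> g)"
  show "eventually (\<lambda>n. prob {\<omega>\<in>space M. e < \<bar>?S n \<omega> / real n\<bar>} \<le> d) sequentially"
  proof (rule eventually_sequentiallyI[of N])
    fix n assume n: "N \<le> n"
    have npos: "0 < real n" using n unfolding N_def by simp
    have nN: "B\<^sup>2 / (e\<^sup>2 * d) \<le> real n"
    proof -
      have A1: "B\<^sup>2 / (e\<^sup>2 * d) \<le> real (nat \<lceil>B\<^sup>2 / (e\<^sup>2 * d)\<rceil>)" by (rule real_nat_ceiling_ge)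
      have "nat \<lceil>B\<^sup>2 / (e\<^sup>2 * d)\<rceil> \<le> n" using n unfolding N_def by (metis add_leD1)
      then have "real (nat \<lceil>B\<^sup>2 / (e\<^sup>2 * d)\<rceil>) \<le> real n" by (simp only: of_nat_le_iff)
      with A1 show ?thesis by linarith
    qed
    have sub: "{\<omega>\<in>space M. e < \<bar>?S n \<omega> / real n\<bar>} \<subseteq> {\<omega>\<in>space M. e * real n \<le> \<bar>?S n \<omega>\<bar>}"
      using npos by (auto simp: abs_divide less_divide_eq)
    have ms: "{\<omega>\<in>space M. e * real n \<le> \<bar>?S n \<omega>\<bar>} \<in> sets M" by measurable
    have "prob {\<omega>\<in>space M. e < \<bar>?S n \<omega> / real n\<bar>} \<le> prob {\<omega>\<in>space M. e * real n \<le> \<bar>?S n \<omega>\<bar>}"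
      by (rule finite_measure_mono[OF sub ms])
    also have "\<dots> \<le> real n * B\<^sup>2 / (e * real n)\<^sup>2"
      by (rule dev_prob[OF g gb]) (use e npos in simp)
    also have "\<dots> = B\<^sup>2 / (e\<^sup>2 * real n)"
      using npos e by (simp add: power2_eq_square field_simps)
    also have "\<dots> \<le> d"
    proof -
      have "B\<^sup>2 \<le> real n * (e\<^sup>2 * d)" using nN e d by (simp add: divide_le_eq)
      then show ?thesis using npos e d by (simp add: divide_le_eq ac_simps)
    qed
    finally show "prob {\<omega>\<in>space M. e < \<bar>?S n \<omega> / real n\<bar>} \<le> d" .
  qed
qed

lemma dev_bip:
  fixes g :: "real \<Rightarrow> real" and B :: real
  assumes g[measurable]: "g \<in> borel_measurable borel"
    and gb: "AE x in \<mu>. \<bar>g x - integral\<^sup>L \<mu> g\<bar> \<le> B"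
  shows "bip M (\<lambda>n \<omega>. (\<Sum>i<n. (g (X i \<omega>) - integral\<^sup>L \<mu> g)) / sqrt (real n))"
  unfolding bip_def
proof (intro allI impI)
  fix d :: real assume d: "0 < d"
  define K where "K = sqrt (B\<^sup>2 / d) + 1"
  have "0 \<le> sqrt (B\<^sup>2 / d)" using d by simp
  then have Kpos: "0 < K" unfolding K_def by linarith
  have KB: "B\<^sup>2 \<le> d * K\<^sup>2"
  proof -
    have "sqrt (B\<^sup>2 / d) \<le> K" unfolding K_def by simp
    then have "(sqrt (B\<^sup>2 / d))\<^sup>2 \<le> K\<^sup>2" using d by (intro power_mono) auto
    then have "B\<^sup>2 / d \<le> K\<^sup>2" using d by simp
    then show ?thesis using d by (simp add: divide_le_eq ac_simps)
  qed
  let ?S = "\<lambda>n \<omega>. \<Sum>i<n. (g (X i \<omega>) - integral\<^sup>L \<mu> g)"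
  have "eventually (\<lambda>n. prob {\<omega>\<in>space M. K < \<bar>?S n \<omega> / sqrt (real n)\<bar>} \<le> d) sequentially"
  proof (rule eventually_sequentiallyI[of 1])
    fix n :: nat assume n: "1 \<le> n"
    have npos: "0 < real n" using n by simp
    have spos: "0 < sqrt (real n)" using npos by simp
    have sub: "{\<omega>\<in>space M. K < \<bar>?S n \<omega> / sqrt (real n)\<bar>} \<subseteq> {\<omega>\<in>space M. K * sqrt (real n) \<le> \<bar>?S n \<omega>\<bar>}"
      using spos by (auto simp: abs_divide less_divide_eq)
    have ms: "{\<omega>\<in>space M. K * sqrt (real n) \<le> \<bar>?S n \<omega>\<bar>} \<in> sets M" by measurable
    have "prob {\<omega>\<in>space M. K < \<bar>?S n \<omega> / sqrt (real n)\<bar>} \<le> prob {\<omega>\<in>space M. K * sqrt (real n) \<le> \<bar>?S n \<omega>\<bar>}"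
      by (rule finite_measure_mono[OF sub ms])
    also have "\<dots> \<le> real n * B\<^sup>2 / (K * sqrt (real n))\<^sup>2"
      by (rule dev_prob[OF g gb]) (use Kpos spos in simp)
    also have "\<dots> = B\<^sup>2 / K\<^sup>2"
      using npos Kpos by (simp add: power_mult_distrib)
    also have "\<dots> \<le> d" using KB Kpos by (simp add: divide_le_eq ac_simps)
    finally show "prob {\<omega>\<in>space M. K < \<bar>?S n \<omega> / sqrt (real n)\<bar>} \<le> d" .
  qed
  then show "\<exists>K>0. eventually (\<lambda>n. prob {\<omega>\<in>space M. K < \<bar>?S n \<omega> / sqrt (real n)\<bar>} \<le> d) sequentially"
    using Kpos by blast
qed

definition kk :: "nat \<Rightarrow> nat" where "kk n = nat \<lceil>real n * \<beta>\<rceil>"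
definition th :: "nat \<Rightarrow> 's \<Rightarrow> real" where "th n \<omega> = order_stat (\<lambda>i. X i \<omega>) n (kk n)"

lemma th_meas[measurable]: "th n \<in> borel_measurable M"
proof (cases "n = 0")
  case True then show ?thesis by (simp add: th_def[abs_def] order_stat_def)
next
  case False
  then have n: "1 \<le> n" by simp
  note cf = ceil_facts[OF beta n]
  have eq: "{\<omega>\<in>space M. th n \<omega> \<le> t} = {\<omega>\<in>space M. real (kk n) \<le> (\<Sum>i<n. indicator {..t} (X i \<omega>))}" for t
  proof -
    have "th n \<omega> \<le> t \<longleftrightarrow> kk n \<le> card {i. i < n \<and> X i \<omega> \<le> t}" for \<omega>
      unfolding th_def kk_def by (rule order_stat_le_iff) (use cf in auto)
    moreover have "real (card {i. i < n \<and> X i \<omega> \<le> t}) = (\<Sum>i<n. indicator {..t} (X i \<omega>))" for \<omega>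
    proof -
      have "(\<Sum>i<n. indicator {..t} (X i \<omega>)) = (\<Sum>i<n. if X i \<omega> \<le> t then 1 else (0::real))"
        by (rule sum.cong) (auto simp: indicator_def)
      then show ?thesis by (simp only: count_sum)
    qed
    ultimately show ?thesis by (metis (no_types, lifting) of_nat_le_iff)
  qed
  show ?thesis
  proof (subst borel_measurable_iff_le, intro allI)
    fix t
    show "{\<omega>\<in>space M. th n \<omega> \<le> t} \<in> sets M" unfolding eq by measurable
  qed
qed

lemma ind_mean: "integral\<^sup>L \<mu> (indicator {..t}) = F t"
  by (simp add: cdf_def)

lemma ind_bound: "AE x in \<mu>. \<bar>indicator {..t} x - integral\<^sup>L \<mu> (indicator {..t}) \<bar> \<le> (1::real)"
proof -
  have "0 \<le> F t" "F t \<le> 1"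
    using finite_borel_measure.cdf_nonneg[OF fbm] real_distribution.cdf_bounded_prob[OF rd] by auto
  then show ?thesis unfolding ind_mean by (auto simp: indicator_def)
qed

lemma th_cip: "cip M (\<lambda>n \<omega>. th n \<omega> - q)"
  unfolding cip_def
proof (intro allI impI)
  fix e d :: real assume e: "0 < e" and d: "0 < d"
  define g1 :: "real \<Rightarrow> real" where "g1 = indicator {..q+e}"
  define g2 :: "real \<Rightarrow> real" where "g2 = indicator {..q-e}"
  define \<gamma>1 where "\<gamma>1 = F (q + e) - \<beta>"
  define \<gamma>2 where "\<gamma>2 = \<beta> - F (q - e)"
  have g1pos: "0 < \<gamma>1" unfolding \<gamma>1_def using F_gt[OF e] by simp
  have g2pos: "0 < \<gamma>2" unfolding \<gamma>2_def using F_lt[OF e] by simp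
  have m1: "integral\<^sup>L \<mu> g1 = F (q + e)" unfolding g1_def by (rule ind_mean)
  have m2: "integral\<^sup>L \<mu> g2 = F (q - e)" unfolding g2_def by (rule ind_mean)
  let ?S1 = "\<lambda>n \<omega>. \<Sum>i<n. (g1 (X i \<omega>) - integral\<^sup>L \<mu> g1)"
  let ?S2 = "\<lambda>n \<omega>. \<Sum>i<n. (g2 (X i \<omega>) - integral\<^sup>L \<mu> g2)"
  have c1: "cip M (\<lambda>n \<omega>. ?S1 n \<omega> / real n)"
    by (rule dev_cip[where B=1]) (use ind_bound in \<open>auto simp: g1_def\<close>)
  have c2: "cip M (\<lambda>n \<omega>. ?S2 n \<omega> / real n)"
    by (rule dev_cip[where B=1]) (use ind_bound in \<open>auto simp: g2_def\<close>)
  have ev1: "eventually (\<lambda>n. prob {\<omega>\<in>space M. \<gamma>1/4 < \<bar>?S1 n \<omega> / real n\<bar>} \<le> d/2) sequentially"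
    using c1[unfolded cip_def, rule_format, of "\<gamma>1/4" "d/2"] g1pos d by auto
  have ev2: "eventually (\<lambda>n. prob {\<omega>\<in>space M. \<gamma>2/4 < \<bar>?S2 n \<omega> / real n\<bar>} \<le> d/2) sequentially"
    using c2[unfolded cip_def, rule_format, of "\<gamma>2/4" "d/2"] g2pos d by auto
  obtain N0 where N0: "2 / \<gamma>1 < real N0" using reals_Archimedean2 by blast
  have ev3: "eventually (\<lambda>n. 1 \<le> n \<and> 2 / \<gamma>1 < real n) sequentially"
    by (rule eventually_sequentiallyI[of "N0 + 1"]) (use N0 in auto)
  from ev1 ev2 ev3 show "eventually (\<lambda>n. prob {\<omega>\<in>space M. e < \<bar>th n \<omega> - q\<bar>} \<le> d) sequentially"
  proof eventually_elim
    case (elim n)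
    have n: "1 \<le> n" using elim(3) by simp
    have npos: "0 < real n" using n by simp
    note cf = ceil_facts[OF beta n]
    have cnt: "real (card {i. i < n \<and> X i \<omega> \<le> t}) = (\<Sum>i<n. indicator {..t} (X i \<omega>))" for \<omega> t
    proof -
      have "(\<Sum>i<n. indicator {..t} (X i \<omega>)) = (\<Sum>i<n. if X i \<omega> \<le> t then 1 else (0::real))"
        by (rule sum.cong) (auto simp: indicator_def)
      then show ?thesis by (simp only: count_sum)
    qed
    have sum1: "?S1 n \<omega> = real (card {i. i < n \<and> X i \<omega> \<le> q + e}) - real n * F (q + e)" for \<omega>
      unfolding m1 g1_def cnt by (simp add: sum_subtractf mu_le)
    have sum2: "?S2 n \<omega> = real (card {i. i < n \<and> X i \<omega> \<le> q - e}) - real n * F (q - e)" for \<omega>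
      unfolding m2 g2_def cnt by (simp add: sum_subtractf mu_le)
    have sub: "{\<omega>\<in>space M. e < \<bar>th n \<omega> - q\<bar>} \<subseteq>
        {\<omega>\<in>space M. \<gamma>1/4 < \<bar>?S1 n \<omega> / real n\<bar>} \<union> {\<omega>\<in>space M. \<gamma>2/4 < \<bar>?S2 n \<omega> / real n\<bar>}"
    proof
      fix \<omega> assume h: "\<omega> \<in> {\<omega>\<in>space M. e < \<bar>th n \<omega> - q\<bar>}"
      show "\<omega> \<in> {\<omega>\<in>space M. \<gamma>1/4 < \<bar>?S1 n \<omega> / real n\<bar>} \<union> {\<omega>\<in>space M. \<gamma>2/4 < \<bar>?S2 n \<omega> / real n\<bar>}"
      proof (cases "q + e < th n \<omega>")
        case True
        have "th n \<omega> \<le> q + e \<longleftrightarrow> kk n \<le> card {i. i < n \<and> X i \<omega> \<le> q + e}"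
          unfolding th_def kk_def by (rule order_stat_le_iff) (use cf in auto)
        then have "\<not> kk n \<le> card {i. i < n \<and> X i \<omega> \<le> q + e}" using True by auto
        then have "real (card {i. i < n \<and> X i \<omega> \<le> q + e}) < real (kk n)" by simp
        then have "?S1 n \<omega> < real n * \<beta> + 1 - real n * F (q + e)"
          unfolding sum1 using cf(4) unfolding kk_def by linarith
        also have "\<dots> = 1 - real n * \<gamma>1" unfolding \<gamma>1_def by (simp add: algebra_simps)
        finally have "?S1 n \<omega> < 1 - real n * \<gamma>1" .
        moreover have "2 < real n * \<gamma>1" using elim(3) g1pos by (simp add: divide_less_eq)
        ultimately have "real n * (\<gamma>1/4) < \<bar>?S1 n \<omega>\<bar>" using g1pos npos by linarith
        then have "\<gamma>1/4 < \<bar>?S1 n \<omega> / real n\<bar>" using npos by (simp add: abs_divide less_divide_eq mult.commute)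
        then show ?thesis using h by auto
      next
        case False
        then have lt: "th n \<omega> < q - e" using h by auto
        have "th n \<omega> \<le> q - e \<longleftrightarrow> kk n \<le> card {i. i < n \<and> X i \<omega> \<le> q - e}"
          unfolding th_def kk_def by (rule order_stat_le_iff) (use cf in auto)
        then have "kk n \<le> card {i. i < n \<and> X i \<omega> \<le> q - e}" using lt by auto
        then have "real (kk n) \<le> real (card {i. i < n \<and> X i \<omega> \<le> q - e})" by simp
        then have "real n * \<beta> - real n * F (q - e) \<le> ?S2 n \<omega>"
          unfolding sum2 using cf(3) unfolding kk_def by linarith
        moreover have "real n * \<beta> - real n * F (q - e) = real n * \<gamma>2" unfolding \<gamma>2_def by (simp add: algebra_simps)
        moreover have "0 < real n * \<gamma>2" using g2pos npos by simp
        ultimately have "real n * (\<gamma>2/4) < \<bar>?S2 n \<omega>\<bar>" by linarith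
        then have "\<gamma>2/4 < \<bar>?S2 n \<omega> / real n\<bar>" using npos by (simp add: abs_divide less_divide_eq mult.commute)
        then show ?thesis using h by auto
      qed
    qed
    have "prob {\<omega>\<in>space M. e < \<bar>th n \<omega> - q\<bar>} \<le>
        prob ({\<omega>\<in>space M. \<gamma>1/4 < \<bar>?S1 n \<omega> / real n\<bar>} \<union> {\<omega>\<in>space M. \<gamma>2/4 < \<bar>?S2 n \<omega> / real n\<bar>})"
      by (rule finite_measure_mono[OF sub]) (unfold g1_def g2_def, measurable)
    also have "\<dots> \<le> prob {\<omega>\<in>space M. \<gamma>1/4 < \<bar>?S1 n \<omega> / real n\<bar>} + prob {\<omega>\<in>space M. \<gamma>2/4 < \<bar>?S2 n \<omega> / real n\<bar>}"
      by (rule measure_Un_le) (unfold g1_def g2_def, measurable)+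
    finally show ?case using elim(1,2) by simp
  qed
qed

end

context prob_space
begin

lemma cdf_distr_eq:
  assumes [measurable]: "f \<in> borel_measurable M"
  shows "cdf (distr M borel f) x = prob {\<omega>\<in>space M. f \<omega> \<le> x}"
proof -
  have "cdf (distr M borel f) x = prob (f -` {..x} \<inter> space M)"
    by (simp add: cdf_def measure_distr)
  also have "f -` {..x} \<inter> space M = {\<omega>\<in>space M. f \<omega> \<le> x}" by auto
  finally show ?thesis .
qed

lemma slutsky:
  assumes [measurable]: "\<And>n. Z n \<in> borel_measurable M" "\<And>n. T n \<in> borel_measurable M"
    and wc: "weak_conv_m (\<lambda>n. distr M borel (Z n)) std_normal_distribution"
    and c: "cip M (\<lambda>n \<omega>. T n \<omega> - Z n \<omega>)"
  shows "weak_conv_m (\<lambda>n. distr M borel (T n)) std_normal_distribution"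
  unfolding weak_conv_m_def weak_conv_def
proof (intro allI impI)
  fix x
  let ?P = "cdf std_normal_distribution"
  have Zc: "(\<lambda>n. prob {\<omega>\<in>space M. Z n \<omega> \<le> y}) \<longlonglongrightarrow> ?P y" for y
    using wc std_normal_isCont[of y] unfolding weak_conv_m_def weak_conv_def
    by (simp add: cdf_distr_eq)
  show "(\<lambda>n. cdf (distr M borel (T n)) x) \<longlonglongrightarrow> ?P x"
    unfolding cdf_distr_eq[OF assms(2)]
  proof (rule LIMSEQ_I)
    fix r :: real assume r: "0 < r"
    have "?P \<midarrow>x\<rightarrow> ?P x" using std_normal_isCont[of x] by (simp add: isCont_def)
    from LIM_D[OF this, of "r/4"] r obtain s where s: "0 < s"
      "\<And>y. y \<noteq> x \<and> norm (y - x) < s \<longrightarrow> norm (?P y - ?P x) < r/4" by auto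
    define \<epsilon> where "\<epsilon> = s/2"
    have ep: "0 < \<epsilon>" using s by (simp add: \<epsilon>_def)
    have P1: "\<bar>?P (x + \<epsilon>) - ?P x\<bar> < r/4" using s(2)[of "x + \<epsilon>"] s(1) by (auto simp: \<epsilon>_def)
    have P2: "\<bar>?P (x - \<epsilon>) - ?P x\<bar> < r/4" using s(2)[of "x - \<epsilon>"] s(1) by (auto simp: \<epsilon>_def)
    have e1: "eventually (\<lambda>n. \<bar>prob {\<omega>\<in>space M. Z n \<omega> \<le> x + \<epsilon>} - ?P (x + \<epsilon>)\<bar> < r/4) sequentially"
      using Zc[of "x + \<epsilon>", unfolded tendsto_iff dist_real_def, rule_format, of "r/4"] r by simp
    have e2: "eventually (\<lambda>n. \<bar>prob {\<omega>\<in>space M. Z n \<omega> \<le> x - \<epsilon>} - ?P (x - \<epsilon>)\<bar> < r/4) sequentially"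
      using Zc[of "x - \<epsilon>", unfolded tendsto_iff dist_real_def, rule_format, of "r/4"] r by simp
    have e3: "eventually (\<lambda>n. prob {\<omega>\<in>space M. \<epsilon> < \<bar>T n \<omega> - Z n \<omega>\<bar>} \<le> r/8) sequentially"
      using c[unfolded cip_def, rule_format, of \<epsilon> "r/8"] ep r by auto
    have "eventually (\<lambda>n. norm (prob {\<omega>\<in>space M. T n \<omega> \<le> x} - ?P x) < r) sequentially"
      using e1 e2 e3
    proof eventually_elim
      case (elim n)
      let ?E = "{\<omega>\<in>space M. \<epsilon> < \<bar>T n \<omega> - Z n \<omega>\<bar>}"
      have up: "prob {\<omega>\<in>space M. T n \<omega> \<le> x} \<le> prob {\<omega>\<in>space M. Z n \<omega> \<le> x + \<epsilon>} + prob ?E"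
      proof -
        have "prob {\<omega>\<in>space M. T n \<omega> \<le> x} \<le> prob ({\<omega>\<in>space M. Z n \<omega> \<le> x + \<epsilon>} \<union> ?E)"
          by (rule finite_measure_mono) auto
        also have "\<dots> \<le> prob {\<omega>\<in>space M. Z n \<omega> \<le> x + \<epsilon>} + prob ?E"
          by (rule measure_Un_le) auto
        finally show ?thesis .
      qed
      have lo: "prob {\<omega>\<in>space M. Z n \<omega> \<le> x - \<epsilon>} \<le> prob {\<omega>\<in>space M. T n \<omega> \<le> x} + prob ?E"
      proof -
        have "prob {\<omega>\<in>space M. Z n \<omega> \<le> x - \<epsilon>} \<le> prob ({\<omega>\<in>space M. T n \<omega> \<le> x} \<union> ?E)"
          by (rule finite_measure_mono) auto
        also have "\<dots> \<le> prob {\<omega>\<in>space M. T n \<omega> \<le> x} + prob ?E"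
          by (rule measure_Un_le) auto
        finally show ?thesis .
      qed
      have h1: "prob {\<omega>\<in>space M. T n \<omega> \<le> x} - ?P x < r"
        using up elim(1)[unfolded abs_less_iff] elim(3) P1[unfolded abs_less_iff] r by linarith
      have h2: "?P x - prob {\<omega>\<in>space M. T n \<omega> \<le> x} < r"
        using lo elim(2)[unfolded abs_less_iff] elim(3) P2[unfolded abs_less_iff] r by linarith
      show ?case using h1 h2 by (simp add: abs_less_iff)
    qed
    then show "\<exists>no. \<forall>n\<ge>no. norm (prob {\<omega>\<in>space M. T n \<omega> \<le> x} - ?P x) < r"
      by (simp add: eventually_sequentially)
  qed
qed

lemma cip_abs: "cip M f \<Longrightarrow> cip M (\<lambda>n \<omega>. \<bar>f n \<omega>\<bar>)"
  unfolding cip_def by simp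

lemma bip_abs: "bip M f \<Longrightarrow> bip M (\<lambda>n \<omega>. \<bar>f n \<omega>\<bar>)"
  unfolding bip_def by simp

lemma cip_cover3:
  assumes [measurable]: "\<And>n. f1 n \<in> borel_measurable M" "\<And>n. f2 n \<in> borel_measurable M"
    "\<And>n. f3 n \<in> borel_measurable M"
    and c1: "cip M f1" and c2: "cip M f2" and c3: "cip M f3"
    and cov: "\<And>e. 0 < e \<Longrightarrow> \<exists>e1>0. \<exists>e2>0. \<exists>e3>0. eventually (\<lambda>n. \<forall>\<omega>\<in>space M.
        e < \<bar>T n \<omega>\<bar> \<longrightarrow> e1 < \<bar>f1 n \<omega>\<bar> \<or> e2 < \<bar>f2 n \<omega>\<bar> \<or> e3 < \<bar>f3 n \<omega>\<bar>) sequentially"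
  shows "cip M T"
  unfolding cip_def
proof (intro allI impI)
  fix e d :: real assume e: "0 < e" and d: "0 < d"
  obtain e1 e2 e3 where ee: "0 < e1" "0 < e2" "0 < e3" and ev: "eventually (\<lambda>n. \<forall>\<omega>\<in>space M.
        e < \<bar>T n \<omega>\<bar> \<longrightarrow> e1 < \<bar>f1 n \<omega>\<bar> \<or> e2 < \<bar>f2 n \<omega>\<bar> \<or> e3 < \<bar>f3 n \<omega>\<bar>) sequentially"
    using cov[OF e] by blast
  have ev1: "eventually (\<lambda>n. prob {\<omega>\<in>space M. e1 < \<bar>f1 n \<omega>\<bar>} \<le> d/3) sequentially"
    using c1[unfolded cip_def, rule_format, of e1 "d/3"] ee d by auto
  have ev2: "eventually (\<lambda>n. prob {\<omega>\<in>space M. e2 < \<bar>f2 n \<omega>\<bar>} \<le> d/3) sequentially"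
    using c2[unfolded cip_def, rule_format, of e2 "d/3"] ee d by auto
  have ev3: "eventually (\<lambda>n. prob {\<omega>\<in>space M. e3 < \<bar>f3 n \<omega>\<bar>} \<le> d/3) sequentially"
    using c3[unfolded cip_def, rule_format, of e3 "d/3"] ee d by auto
  from ev ev1 ev2 ev3 show "eventually (\<lambda>n. prob {\<omega>\<in>space M. e < \<bar>T n \<omega>\<bar>} \<le> d) sequentially"
  proof eventually_elim
    case (elim n)
    let ?A1 = "{\<omega>\<in>space M. e1 < \<bar>f1 n \<omega>\<bar>}"
    let ?A2 = "{\<omega>\<in>space M. e2 < \<bar>f2 n \<omega>\<bar>}"
    let ?A3 = "{\<omega>\<in>space M. e3 < \<bar>f3 n \<omega>\<bar>}"
    have "prob {\<omega>\<in>space M. e < \<bar>T n \<omega>\<bar>} \<le> prob (?A1 \<union> (?A2 \<union> ?A3))"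
      by (rule finite_measure_mono) (use elim(1) in auto)
    also have "\<dots> \<le> prob ?A1 + prob (?A2 \<union> ?A3)"
      by (rule measure_Un_le) auto
    also have "prob (?A2 \<union> ?A3) \<le> prob ?A2 + prob ?A3"
      by (rule measure_Un_le) auto
    finally show ?case using elim by simp
  qed
qed

end

lemma sv_formula:
  fixes y :: "nat \<Rightarrow> real"
  assumes "1 \<le> n"
  shows "sample_var y n = ((\<Sum>i<n. (y i)\<^sup>2) - (\<Sum>i<n. y i)\<^sup>2 / real n) / (real n - 1)"
proof -
  define s where "s = (\<Sum>i<n. y i)"
  have npos: "0 < real n" using assms by simp
  define c where "c = s / real n"
  have "(\<Sum>i<n. (y i - c)\<^sup>2) = (\<Sum>i<n. (y i)\<^sup>2 - 2 * c * y i + c\<^sup>2)"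
    by (rule sum.cong) (auto simp: power2_eq_square algebra_simps)
  also have "\<dots> = (\<Sum>i<n. (y i)\<^sup>2) - 2 * c * s + real n * c\<^sup>2"
    by (simp add: sum.distrib sum_subtractf sum_distrib_left[symmetric] s_def)
  also have "\<dots> = (\<Sum>i<n. (y i)\<^sup>2) - s\<^sup>2 / real n"
    using npos unfolding c_def by (simp add: power2_eq_square field_simps)
  finally show ?thesis unfolding sample_var_def s_def[symmetric] c_def by simp
qed

lemma sv_shift:
  fixes y :: "nat \<Rightarrow> real"
  shows "sample_var (\<lambda>i. c + y i) n = sample_var y n"
proof (cases "n = 0")
  case True then show ?thesis by (simp add: sample_var_def)
next
  case False
  then have npos: "0 < real n" by simp
  have "(\<Sum>j<n. c + y j) / real n = c + (\<Sum>j<n. y j) / real n"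
    using npos by (simp add: sum.distrib field_simps)
  then show ?thesis unfolding sample_var_def by simp
qed

lemma sv_nonneg: "0 \<le> sample_var y n"
proof (cases "n = 0")
  case True then show ?thesis by (simp add: sample_var_def)
next
  case False
  then have "0 \<le> real n - 1" by simp
  then show ?thesis unfolding sample_var_def by (intro divide_nonneg_nonneg sum_nonneg) auto
qed

lemma sv_dev:
  fixes y :: "nat \<Rightarrow> real" and m v :: real
  assumes n: "2 \<le> n"
  defines "s1 \<equiv> (\<Sum>i<n. (y i - m)) / real n"
  defines "s2 \<equiv> (\<Sum>i<n. ((y i)\<^sup>2 - (v + m\<^sup>2))) / real n"
  shows "\<bar>sample_var y n - v\<bar> \<le> 2 * (\<bar>s2\<bar> + \<bar>s1\<bar> * \<bar>s1\<bar> + 2 * \<bar>m\<bar> * \<bar>s1\<bar>) + 2 * \<bar>v\<bar> / real n"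
proof -
  have npos: "0 < real n" using n by simp
  have n1: "0 < real n - 1" using n by simp
  have sy: "(\<Sum>i<n. y i) = real n * (s1 + m)"
    using npos by (simp add: s1_def sum_subtractf field_simps)
  have sy2: "(\<Sum>i<n. (y i)\<^sup>2) = real n * (s2 + v + m\<^sup>2)"
    using npos by (simp add: s2_def sum_subtractf field_simps)
  have num: "real n * (s2 + v + m\<^sup>2) - (real n * (s1 + m))\<^sup>2 / real n = real n * (s2 + v - s1 * s1 - 2 * m * s1)"
    using npos by (simp add: power2_eq_square field_simps)
  have "sample_var y n = (real n * (s2 + v + m\<^sup>2) - (real n * (s1 + m))\<^sup>2 / real n) / (real n - 1)"
    using n by (simp add: sv_formula sy sy2)
  then have S: "sample_var y n = real n * ((s2 - s1 * s1 - 2 * m * s1) + v) / (real n - 1)" using num by simp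
  define X' where "X' = s2 - s1 * s1 - 2 * m * s1"
  have "real n * (X' + v) = (real n * X' + v) + v * (real n - 1)" by (simp add: algebra_simps)
  then have "real n * (X' + v) / (real n - 1) = (real n * X' + v) / (real n - 1) + v * (real n - 1) / (real n - 1)"
    by (simp add: add_divide_distrib)
  then have "real n * (X' + v) / (real n - 1) = (real n * X' + v) / (real n - 1) + v" using n1 by simp
  then have sv: "sample_var y n - v = (real n / (real n - 1)) * (s2 - s1 * s1 - 2 * m * s1) + v / (real n - 1)"
    using S unfolding X'_def by (simp add: add_divide_distrib)
  have r1: "real n / (real n - 1) \<le> 2" using n n1 by (simp add: divide_le_eq)
  have r0: "0 \<le> real n / (real n - 1)" using npos n1 by simp
  have "\<bar>s2 - s1 * s1 - 2 * m * s1\<bar> \<le> \<bar>s2\<bar> + \<bar>s1\<bar> * \<bar>s1\<bar> + 2 * \<bar>m\<bar> * \<bar>s1\<bar>"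
    by (simp add: abs_mult abs_triangle_ineq4 order_trans[OF abs_triangle_ineq4])
  then have Xb: "\<bar>s2 - s1 * s1 - 2 * m * s1\<bar> \<le> \<bar>s2\<bar> + \<bar>s1\<bar> * \<bar>s1\<bar> + 2 * \<bar>m\<bar> * \<bar>s1\<bar>" .
  have "\<bar>(real n / (real n - 1)) * (s2 - s1 * s1 - 2 * m * s1)\<bar> = (real n / (real n - 1)) * \<bar>s2 - s1 * s1 - 2 * m * s1\<bar>"
    using r0 n1 by (simp add: abs_mult)
  also have "\<dots> \<le> 2 * \<bar>s2 - s1 * s1 - 2 * m * s1\<bar>" using r1 by (intro mult_right_mono) auto
  also have "\<dots> \<le> 2 * (\<bar>s2\<bar> + \<bar>s1\<bar> * \<bar>s1\<bar> + 2 * \<bar>m\<bar> * \<bar>s1\<bar>)" using Xb by simp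
  finally have A: "\<bar>(real n / (real n - 1)) * (s2 - s1 * s1 - 2 * m * s1)\<bar> \<le> 2 * (\<bar>s2\<bar> + \<bar>s1\<bar> * \<bar>s1\<bar> + 2 * \<bar>m\<bar> * \<bar>s1\<bar>)" .
  have "\<bar>v / (real n - 1)\<bar> \<le> 2 * \<bar>v\<bar> / real n"
  proof -
    have "real n \<le> 2 * (real n - 1)" using n by simp
    then have "\<bar>v\<bar> * real n \<le> 2 * \<bar>v\<bar> * (real n - 1)" by (metis abs_ge_zero mult.assoc mult_left_mono mult.commute)
    then show ?thesis using npos n1 by (simp add: abs_divide divide_le_eq le_divide_eq)
  qed
  then show ?thesis unfolding sv using A by linarith
qed

lemma sv_lip:
  fixes w u :: "nat \<Rightarrow> real"
  assumes n: "2 \<le> n"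
    and d: "\<And>i. i < n \<Longrightarrow> \<bar>w i - u i\<bar> \<le> \<delta>"
    and r: "\<And>i. i < n \<Longrightarrow> u i \<in> {lo..hi}"
  shows "\<bar>sample_var w n - sample_var u n\<bar> \<le> 8 * (hi - lo) * \<delta> + 8 * \<delta> * \<delta>"
proof -
  have npos: "0 < real n" using n by simp
  have n1: "0 < real n - 1" using n by simp
  define ub where "ub = (\<Sum>j<n. u j) / real n"
  define wb where "wb = (\<Sum>j<n. w j) / real n"
  define U where "U i = u i - ub" for i
  define E where "E i = (w i - wb) - (u i - ub)" for i
  have dpos: "0 \<le> \<delta>" using d[of 0] n by (meson abs_ge_zero order_trans zero_less_numeral le_trans[of 0] less_le_trans[of 0 2 n, OF _ n[unfolded Suc_le_eq[symmetric]]] le_less_trans) 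
  have ub_r: "ub \<in> {lo..hi}"
  proof -
    have "(\<Sum>j<n. lo) \<le> (\<Sum>j<n. u j)" by (rule sum_mono) (use r in auto)
    moreover have "(\<Sum>j<n. u j) \<le> (\<Sum>j<n. hi)" by (rule sum_mono) (use r in auto)
    ultimately show ?thesis using npos unfolding ub_def by (auto simp: field_simps)
  qed
  have Ub: "\<bar>U i\<bar> \<le> hi - lo" if "i < n" for i using r[OF that] ub_r unfolding U_def by auto
  have db: "\<bar>wb - ub\<bar> \<le> \<delta>"
  proof -
    have "\<bar>(\<Sum>j<n. w j) - (\<Sum>j<n. u j)\<bar> = \<bar>\<Sum>j<n. (w j - u j)\<bar>" by (simp add: sum_subtractf)
    also have "\<dots> \<le> (\<Sum>j<n. \<bar>w j - u j\<bar>)" by (rule sum_abs)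
    also have "\<dots> \<le> (\<Sum>j<n. \<delta>)" using d by (intro sum_mono) auto
    finally have "\<bar>(\<Sum>j<n. w j) - (\<Sum>j<n. u j)\<bar> \<le> real n * \<delta>" by simp
    then show ?thesis using npos unfolding wb_def ub_def
      by (simp add: diff_divide_distrib[symmetric] abs_divide divide_le_eq mult.commute)
  qed
  have Eb: "\<bar>E i\<bar> \<le> 2 * \<delta>" if "i < n" for i
    using d[OF that] db unfolding E_def by linarith
  have key: "\<bar>(w i - wb)\<^sup>2 - (u i - ub)\<^sup>2\<bar> \<le> 4 * (hi - lo) * \<delta> + 4 * \<delta> * \<delta>" if "i < n" for i
  proof -
    have "(w i - wb)\<^sup>2 - (u i - ub)\<^sup>2 = 2 * U i * E i + E i * E i"
      unfolding U_def E_def by (simp add: power2_eq_square algebra_simps)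
    also have "\<bar>\<dots>\<bar> \<le> 2 * \<bar>U i\<bar> * \<bar>E i\<bar> + \<bar>E i\<bar> * \<bar>E i\<bar>"
      by (metis abs_mult abs_triangle_ineq abs_numeral mult.assoc)
    also have "\<dots> \<le> 2 * (hi - lo) * (2 * \<delta>) + (2 * \<delta>) * (2 * \<delta>)"
      using Ub[OF that] Eb[OF that] by (intro add_mono mult_mono) auto
    finally show ?thesis by (simp add: algebra_simps)
  qed
  have "\<bar>(\<Sum>i<n. (w i - wb)\<^sup>2) - (\<Sum>i<n. (u i - ub)\<^sup>2)\<bar> \<le> (\<Sum>i<n. \<bar>(w i - wb)\<^sup>2 - (u i - ub)\<^sup>2\<bar>)"
    by (simp add: sum_subtractf[symmetric] sum_abs)
  also have "\<dots> \<le> (\<Sum>i<n. 4 * (hi - lo) * \<delta> + 4 * \<delta> * \<delta>)" using key by (intro sum_mono) auto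
  finally have S: "\<bar>(\<Sum>i<n. (w i - wb)\<^sup>2) - (\<Sum>i<n. (u i - ub)\<^sup>2)\<bar> \<le> real n * (4 * (hi - lo) * \<delta> + 4 * \<delta> * \<delta>)"
    by simp
  have "sample_var w n - sample_var u n = ((\<Sum>i<n. (w i - wb)\<^sup>2) - (\<Sum>i<n. (u i - ub)\<^sup>2)) / (real n - 1)"
    unfolding sample_var_def wb_def ub_def by (simp add: diff_divide_distrib)
  then have "\<bar>sample_var w n - sample_var u n\<bar> \<le> real n * (4 * (hi - lo) * \<delta> + 4 * \<delta> * \<delta>) / (real n - 1)"
    using S n1 by (simp add: abs_divide divide_right_mono)
  also have "\<dots> \<le> 2 * (4 * (hi - lo) * \<delta> + 4 * \<delta> * \<delta>)"
  proof -
    have nn: "0 \<le> 4 * (hi - lo) * \<delta> + 4 * \<delta> * \<delta>" using dpos ub_r by auto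
    have "real n \<le> 2 * (real n - 1)" using n by simp
    then have "real n * (4 * (hi - lo) * \<delta> + 4 * \<delta> * \<delta>) \<le> 2 * (real n - 1) * (4 * (hi - lo) * \<delta> + 4 * \<delta> * \<delta>)"
      using nn by (intro mult_right_mono) auto
    then have "real n * (4 * (hi - lo) * \<delta> + 4 * \<delta> * \<delta>) \<le> (2 * (4 * (hi - lo) * \<delta> + 4 * \<delta> * \<delta>)) * (real n - 1)"
      by (simp only: ac_simps)
    then show ?thesis by (simp only: pos_divide_le_eq[OF n1])
  qed
  finally show ?thesis by (simp add: algebra_simps)
qed

context cvar_setup
begin

definition Yf :: "real \<Rightarrow> real" where "Yf x = max (x - q) 0"

lemma Yf_meas[measurable]: "Yf \<in> borel_measurable borel"
  unfolding Yf_def by measurable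

lemma m_eq: "integral\<^sup>L \<mu> Yf = m" by (simp add: m_def Yf_def[abs_def])

lemma mean_bound:
  fixes g :: "real \<Rightarrow> real" and C :: real
  assumes [measurable]: "g \<in> borel_measurable borel" and b: "AE x in \<mu>. \<bar>g x\<bar> \<le> C"
  shows "\<bar>integral\<^sup>L \<mu> g\<bar> \<le> C"
proof -
  interpret P: prob_space \<mu> by (rule psmu)
  have ig: "integrable \<mu> g" by (rule int_mu_bound[OF _ b]) simp
  have iC: "integrable \<mu> (\<lambda>x. C)" by (rule int_mu_bound[where B="\<bar>C\<bar>"]) auto
  have "\<bar>integral\<^sup>L \<mu> g\<bar> \<le> integral\<^sup>L \<mu> (\<lambda>x. \<bar>g x\<bar>)"
    using integral_norm_bound[of \<mu> g] by simp
  also have "\<dots> \<le> integral\<^sup>L \<mu> (\<lambda>x. C)"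
    using b ig iC by (intro integral_mono_AE) auto
  also have "\<dots> = C" using P.prob_space by simp
  finally show ?thesis .
qed

lemma centered:
  fixes g :: "real \<Rightarrow> real" and C :: real
  assumes [measurable]: "g \<in> borel_measurable borel" and b: "AE x in \<mu>. \<bar>g x\<bar> \<le> C"
  shows "AE x in \<mu>. \<bar>g x - integral\<^sup>L \<mu> g\<bar> \<le> 2 * C"
  using b by (rule eventually_mono) (use mean_bound[OF assms] in auto)

definition Cb where "Cb = \<bar>a\<bar> + \<bar>b\<bar> + \<bar>q\<bar>"

lemma Yf_bound: "AE x in \<mu>. \<bar>Yf x\<bar> \<le> Cb"
  using AE_mu by eventually_elim (auto simp: Yf_def Cb_def)

lemma Yf2_bound: "AE x in \<mu>. \<bar>(Yf x)\<^sup>2\<bar> \<le> Cb * Cb"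
  using Yf_bound
proof eventually_elim
  case (elim x)
  have "(Yf x)\<^sup>2 \<le> Cb\<^sup>2" by (rule sq_le_bound[OF elim])
  then show ?case by (simp add: power2_eq_square)
qed

lemma ind_gt_bound: "AE x in \<mu>. \<bar>indicator {q<..} x\<bar> \<le> (1::real)"
  by (auto simp: indicator_def)

lemma ind_ge_bound: "AE x in \<mu>. \<bar>indicator {q..} x\<bar> \<le> (1::real)"
  by (auto simp: indicator_def)

lemma mean_gt: "integral\<^sup>L \<mu> (indicator {q<..}) = 1 - \<beta>" using mu_gt by simp
lemma mean_ge: "integral\<^sup>L \<mu> (indicator {q..}) = 1 - \<beta>" using mu_ge by simp

lemma v_eq: "v = integral\<^sup>L \<mu> (\<lambda>x. (Yf x)\<^sup>2) - m\<^sup>2"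
proof -
  interpret P: prob_space \<mu> by (rule psmu)
  have i1: "integrable \<mu> Yf" by (rule int_mu_bound[OF _ Yf_bound]) simp
  have i2: "integrable \<mu> (\<lambda>x. (Yf x)\<^sup>2)" by (rule int_mu_bound[OF _ Yf2_bound]) simp
  have "v = integral\<^sup>L \<mu> (\<lambda>x. (Yf x)\<^sup>2 - 2 * m * Yf x + m\<^sup>2)"
    unfolding v_def Yf_def[symmetric, abs_def] by (intro Bochner_Integration.integral_cong) (auto simp: power2_eq_square algebra_simps Yf_def)
  also have "\<dots> = integral\<^sup>L \<mu> (\<lambda>x. (Yf x)\<^sup>2) - 2 * m * integral\<^sup>L \<mu> Yf + m\<^sup>2"
    using i1 i2 P.prob_space by simp
  finally show ?thesis using m_eq by (simp add: power2_eq_square)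
qed

lemma v_pos: "0 < v"
proof -
  interpret P: prob_space \<mu> by (rule psmu)
  have i: "integrable \<mu> (\<lambda>x. (Yf x - m)\<^sup>2)"
  proof (rule int_mu_bound[where B="(2 * Cb)\<^sup>2"])
    show "AE x in \<mu>. \<bar>(Yf x - m)\<^sup>2\<bar> \<le> (2 * Cb)\<^sup>2"
      using centered[OF Yf_meas Yf_bound] unfolding m_eq
    proof eventually_elim
      case (elim x)
      have "(Yf x - m)\<^sup>2 \<le> (2 * Cb)\<^sup>2" by (rule sq_le_bound[OF elim])
      then show ?case by simp
    qed
  qed simp
  have v': "v = integral\<^sup>L \<mu> (\<lambda>x. (Yf x - m)\<^sup>2)" unfolding v_def Yf_def by simp
  have "0 \<le> v" unfolding v' by simp
  moreover have "v \<noteq> 0"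
  proof
    assume "v = 0"
    then have "AE x in \<mu>. (Yf x - m)\<^sup>2 = 0"
      using integral_nonneg_eq_0_iff_AE[OF i] v' by simp
    then have ae: "AE x in \<mu>. Yf x = m" by simp
    show False
    proof (cases "m = 0")
      case True
      have "AE x in \<mu>. x \<notin> {q<..}" using ae by (rule eventually_mono) (use True in \<open>auto simp: Yf_def\<close>)
      then have "emeasure \<mu> {x\<in>space \<mu>. x \<in> {q<..}} = 0" by (intro emeasure_eq_0_AE) simp
      then have "measure \<mu> {q<..} = 0" by (simp add: measure_def greaterThan_def)
      then show False using mu_gt beta by simp
    next
      case False
      have "AE x in \<mu>. x \<notin> {..q}" using ae by (rule eventually_mono) (use False in \<open>auto simp: Yf_def\<close>)
      then have "emeasure \<mu> {x\<in>space \<mu>. x \<in> {..q}} = 0" by (intro emeasure_eq_0_AE) simp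
      then have "measure \<mu> {..q} = 0" by (simp add: measure_def atMost_def)
      then show False using mu_le Fq beta by simp
    qed
  qed
  ultimately show ?thesis by simp
qed

definition Z :: "nat \<Rightarrow> 's \<Rightarrow> real" where
  "Z n \<omega> = (\<Sum>i<n. Yf (X i \<omega>) - m) / sqrt (real n * (sqrt v)\<^sup>2)"

lemma Z_meas[measurable]: "Z n \<in> borel_measurable M"
  unfolding Z_def by measurable

lemma Z_clt: "weak_conv_m (\<lambda>n. distr M borel (Z n)) std_normal_distribution"
proof -
  let ?Y = "\<lambda>i \<omega>. Yf (X i \<omega>)"
  have ind: "indep_vars (\<lambda>i. borel) ?Y UNIV"
    using indep_vars_compose2[OF indep, of "\<lambda>i. Yf" "\<lambda>_. borel"] by simp
  have mean: "expectation (?Y n) = m" for n using exp_X[of Yf n] m_eq by simp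
  have sq: "integrable M (\<lambda>x. (?Y n x)\<^sup>2)" for n
  proof (rule integrable_const_bound[where B="Cb * Cb"])
    have "AE x in distr M borel (X n). \<bar>(Yf x)\<^sup>2\<bar> \<le> Cb * Cb" unfolding ident[of n] by (rule Yf2_bound)
    then show "AE x in M. norm ((?Y n x)\<^sup>2) \<le> Cb * Cb" by (subst (asm) AE_distr_iff) auto
  qed simp
  have var: "variance (?Y n) = (sqrt v)\<^sup>2" for n
  proof -
    have "variance (?Y n) = expectation (\<lambda>\<omega>. (\<lambda>x. (Yf x - m)\<^sup>2) (X n \<omega>))" using mean[of n] by simp
    also have "\<dots> = v" by (subst exp_X) (auto simp: v_def Yf_def)
    finally show ?thesis using v_pos by simp
  qed
  have dis: "distr M borel (?Y n) = distr \<mu> borel Yf" for n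
  proof -
    have "distr (distr M borel (X n)) borel Yf = distr M borel (Yf \<circ> X n)"
      by (rule distr_distr) auto
    then show ?thesis using ident[of n] by (simp add: comp_def)
  qed
  have "weak_conv_m (\<lambda>n. distr M borel (\<lambda>x. (\<Sum>i<n. ?Y i x - m) / sqrt (real n * (sqrt v)\<^sup>2))) std_normal_distribution"
    by (rule central_limit_theorem[OF ind mean _ sq var dis]) (use v_pos in simp)
  then show ?thesis unfolding Z_def by simp
qed

end

lemma sf_alg:
  fixes s k N :: real
  assumes "0 < s" "0 < k"
  shows "s * (1 - (1 / (s * s * k)) * N) = - ((N - s * s * k) / s) / k"
  using assms by (simp add: field_simps)

lemma sf_alg2:
  fixes s k A :: real
  assumes "0 < s" "0 < k"
  shows "s * ((1 / (s * s * k)) * A) = (A / s) / k"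
  using assms by (simp add: field_simps)

lemma sqrt_dev:
  fixes x s :: real
  assumes "0 \<le> x" "0 < s"
  shows "\<bar>sqrt x - s\<bar> \<le> \<bar>x - s\<^sup>2\<bar> / s"
proof -
  have "\<bar>x - s\<^sup>2\<bar> = \<bar>sqrt x - s\<bar> * (sqrt x + s)"
  proof -
    have "x - s\<^sup>2 = (sqrt x - s) * (sqrt x + s)" using assms by (simp add: algebra_simps power2_eq_square)
    then show ?thesis using assms by (simp add: abs_mult)
  qed
  moreover have "\<bar>sqrt x - s\<bar> * s \<le> \<bar>sqrt x - s\<bar> * (sqrt x + s)"
    using assms by (intro mult_left_mono) auto
  ultimately show ?thesis using assms by (simp add: le_divide_eq)
qed

lemma final_alg:
  fixes A D S \<sigma> k e :: real
  assumes k: "0 < k" and s: "0 < \<sigma>" and e: "0 < e"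
    and h1: "\<bar>S - \<sigma>\<bar> \<le> \<sigma> / 2"
    and h2: "\<bar>A * (S - \<sigma>)\<bar> \<le> e * k * \<sigma>\<^sup>2 / 8"
    and h3: "\<bar>D\<bar> \<le> e * \<sigma> / 8"
  shows "\<bar>(A / k - D) / S - (A / k) / \<sigma>\<bar> \<le> e / 2"
proof -
  have S: "\<sigma> / 2 \<le> S" using abs_le_D2[OF h1] by linarith
  have Sp: "0 < S" using S s by simp
  have eq: "(A / k - D) / S - (A / k) / \<sigma> = - (A * (S - \<sigma>)) / (k * S * \<sigma>) - D / S"
    using k s Sp by (simp add: field_simps)
  have t1: "\<bar>A * (S - \<sigma>)\<bar> / (k * S * \<sigma>) \<le> e / 4"
  proof -
    have "\<bar>A * (S - \<sigma>)\<bar> / (k * S * \<sigma>) \<le> (e * k * \<sigma>\<^sup>2 / 8) / (k * S * \<sigma>)"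
      using h2 k s Sp by (intro divide_right_mono) auto
    also have "\<dots> = e * \<sigma> / (8 * S)" using k s Sp by (simp add: power2_eq_square field_simps)
    also have "\<dots> \<le> e * \<sigma> / (8 * (\<sigma> / 2))"
      using S s e by (intro divide_left_mono) auto
    also have "\<dots> = e / 4" using s by simp
    finally show ?thesis .
  qed
  have t2: "\<bar>D\<bar> / S \<le> e / 4"
  proof -
    have "\<bar>D\<bar> / S \<le> (e * \<sigma> / 8) / S" using h3 Sp by (intro divide_right_mono) auto
    also have "\<dots> \<le> (e * \<sigma> / 8) / (\<sigma> / 2)" using S s e by (intro divide_left_mono) auto
    also have "\<dots> = e / 4" using s by simp
    finally show ?thesis .
  qed
  have "\<bar>(A / k - D) / S - (A / k) / \<sigma>\<bar> \<le> \<bar>A * (S - \<sigma>)\<bar> / (k * S * \<sigma>) + \<bar>D\<bar> / S"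
    unfolding eq using k s Sp by (simp add: abs_divide abs_mult abs_triangle_ineq4 order_trans[OF abs_triangle_ineq4])
  then show ?thesis using t1 t2 by linarith
qed

context cvar_setup
begin

definition Ap :: "nat \<Rightarrow> 's \<Rightarrow> real" where
  "Ap n \<omega> = (\<Sum>i<n. (Yf (X i \<omega>) - m)) / sqrt (real n)"
definition B1 :: "nat \<Rightarrow> 's \<Rightarrow> real" where
  "B1 n \<omega> = (\<Sum>i<n. (indicator {q<..} (X i \<omega>) - (1 - \<beta>))) / sqrt (real n)"
definition B2 :: "nat \<Rightarrow> 's \<Rightarrow> real" where
  "B2 n \<omega> = (\<Sum>i<n. (indicator {q..} (X i \<omega>) - (1 - \<beta>))) / sqrt (real n)"
definition Gn :: "nat \<Rightarrow> 's \<Rightarrow> real \<Rightarrow> real" where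
  "Gn n \<omega> s = s + (1 / (real n * (1 - \<beta>))) * (\<Sum>i<n. max (X i \<omega> - s) 0)"
definition Dn :: "nat \<Rightarrow> 's \<Rightarrow> real" where
  "Dn n \<omega> = sqrt (real n) * (Gn n \<omega> q - Gn n \<omega> (th n \<omega>))"

lemma Ap_meas[measurable]: "Ap n \<in> borel_measurable M" unfolding Ap_def by measurable
lemma B1_meas[measurable]: "B1 n \<in> borel_measurable M" unfolding B1_def by measurable
lemma B2_meas[measurable]: "B2 n \<in> borel_measurable M" unfolding B2_def by measurable
lemma Dn_meas[measurable]: "Dn n \<in> borel_measurable M" unfolding Dn_def Gn_def by measurable

lemma Ap_bip: "bip M Ap"
  using dev_bip[OF Yf_meas centered[OF Yf_meas Yf_bound]] unfolding m_eq Ap_def[abs_def] .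

lemma B1_bip: "bip M B1"
  using dev_bip[OF _ centered[OF _ ind_gt_bound]] unfolding mean_gt B1_def[abs_def] by simp

lemma B2_bip: "bip M B2"
  using dev_bip[OF _ centered[OF _ ind_ge_bound]] unfolding mean_ge B2_def[abs_def] by simp

lemma card_ind: "real (card {i. i < n \<and> P (X i \<omega>)}) = (\<Sum>i<n. indicator {x. P x} (X i \<omega>))"
proof -
  have "(\<Sum>i<n. indicator {x. P x} (X i \<omega>)) = (\<Sum>i<n. if P (X i \<omega>) then 1 else (0::real))"
    by (rule sum.cong) (auto simp: indicator_def)
  then show ?thesis by (simp only: count_sum)
qed

lemma Dn_bound:
  assumes n: "1 \<le> n"
  shows "\<bar>Dn n \<omega>\<bar> \<le> \<bar>th n \<omega> - q\<bar> * ((\<bar>B1 n \<omega>\<bar> + \<bar>B2 n \<omega>\<bar>) / (1 - \<beta>))"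
proof -
  define c where "c = 1 / (real n * (1 - \<beta>))"
  define N1 where "N1 = real (card {i. i < n \<and> q < X i \<omega>})"
  define N2 where "N2 = real (card {i. i < n \<and> q \<le> X i \<omega>})"
  note gd = Gdiff[where x="\<lambda>i. X i \<omega>" and q=q, OF beta n]
  have G: "Gn n \<omega> s = s + c * (\<Sum>i<n. max (X i \<omega> - s) 0)" for s unfolding Gn_def c_def by simp
  have t: "th n \<omega> = order_stat (\<lambda>i. X i \<omega>) n (nat \<lceil>real n * \<beta>\<rceil>)" unfolding th_def kk_def by simp
  have g0: "0 \<le> Gn n \<omega> q - Gn n \<omega> (th n \<omega>)" using gd(1) unfolding G t c_def by simp
  have g1: "Gn n \<omega> q - Gn n \<omega> (th n \<omega>) \<le> \<bar>th n \<omega> - q\<bar> * (\<bar>1 - c * N1\<bar> + \<bar>1 - c * N2\<bar>)"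
    using gd(2) unfolding G t c_def N1_def N2_def by simp
  have sp: "0 < sqrt (real n)" using n by simp
  have ss: "sqrt (real n) * sqrt (real n) = real n" by simp
  have k: "0 < 1 - \<beta>" using beta by simp
  have c': "c = 1 / (sqrt (real n) * sqrt (real n) * (1 - \<beta>))" unfolding c_def ss ..
  have e1: "sqrt (real n) * \<bar>1 - c * N1\<bar> = \<bar>B1 n \<omega>\<bar> / (1 - \<beta>)"
  proof -
    have "N1 = (\<Sum>i<n. indicator {q<..} (X i \<omega>))"
      unfolding N1_def using card_ind[of n "\<lambda>x. q < x" \<omega>] by (simp add: greaterThan_def)
    then have B: "B1 n \<omega> = (N1 - real n * (1 - \<beta>)) / sqrt (real n)"
      unfolding B1_def by (simp add: sum_subtractf)
    have "sqrt (real n) * (1 - c * N1) = - ((N1 - real n * (1 - \<beta>)) / sqrt (real n)) / (1 - \<beta>)"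
      unfolding c' using sf_alg[OF sp k, of N1] unfolding ss .
    then have "sqrt (real n) * (1 - c * N1) = - B1 n \<omega> / (1 - \<beta>)" unfolding B by simp
    then have "\<bar>sqrt (real n) * (1 - c * N1)\<bar> = \<bar>B1 n \<omega>\<bar> / (1 - \<beta>)" using k by (simp add: abs_divide)
    then show ?thesis using sp by (simp add: abs_mult)
  qed
  have e2: "sqrt (real n) * \<bar>1 - c * N2\<bar> = \<bar>B2 n \<omega>\<bar> / (1 - \<beta>)"
  proof -
    have "N2 = (\<Sum>i<n. indicator {q..} (X i \<omega>))"
      unfolding N2_def using card_ind[of n "\<lambda>x. q \<le> x" \<omega>] by (simp add: atLeast_def)
    then have B: "B2 n \<omega> = (N2 - real n * (1 - \<beta>)) / sqrt (real n)"
      unfolding B2_def by (simp add: sum_subtractf)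
    have "sqrt (real n) * (1 - c * N2) = - ((N2 - real n * (1 - \<beta>)) / sqrt (real n)) / (1 - \<beta>)"
      unfolding c' using sf_alg[OF sp k, of N2] unfolding ss .
    then have "sqrt (real n) * (1 - c * N2) = - B2 n \<omega> / (1 - \<beta>)" unfolding B by simp
    then have "\<bar>sqrt (real n) * (1 - c * N2)\<bar> = \<bar>B2 n \<omega>\<bar> / (1 - \<beta>)" using k by (simp add: abs_divide)
    then show ?thesis using sp by (simp add: abs_mult)
  qed
  have "\<bar>Dn n \<omega>\<bar> = sqrt (real n) * (Gn n \<omega> q - Gn n \<omega> (th n \<omega>))"
    unfolding Dn_def using g0 sp by (simp add: abs_mult)
  also have "\<dots> \<le> sqrt (real n) * (\<bar>th n \<omega> - q\<bar> * (\<bar>1 - c * N1\<bar> + \<bar>1 - c * N2\<bar>))"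
    using g1 sp by (intro mult_left_mono) auto
  also have "\<dots> = \<bar>th n \<omega> - q\<bar> * (sqrt (real n) * \<bar>1 - c * N1\<bar> + sqrt (real n) * \<bar>1 - c * N2\<bar>)"
    by (simp add: algebra_simps)
  also have "\<dots> = \<bar>th n \<omega> - q\<bar> * ((\<bar>B1 n \<omega>\<bar> + \<bar>B2 n \<omega>\<bar>) / (1 - \<beta>))"
    unfolding e1 e2 by (simp add: add_divide_distrib)
  finally show ?thesis .
qed

lemma Dn_cip: "cip M Dn"
proof -
  have bB: "bip M (\<lambda>n \<omega>. \<bar>B1 n \<omega>\<bar> + \<bar>B2 n \<omega>\<bar>)"
    by (rule bip_add) (auto intro: bip_abs B1_bip B2_bip)
  have ct: "cip M (\<lambda>n \<omega>. (1 / (1 - \<beta>)) * (th n \<omega> - q))"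
    by (rule cip_cmult[OF th_cip])
  have cg: "cip M (\<lambda>n \<omega>. (\<bar>B1 n \<omega>\<bar> + \<bar>B2 n \<omega>\<bar>) * ((1 / (1 - \<beta>)) * (th n \<omega> - q)))"
    by (rule cip_mult[OF _ _ bB ct]) auto
  show ?thesis
  proof (rule cip_dom[OF _ _ cg])
    show "eventually (\<lambda>n. AE \<omega> in M. \<bar>Dn n \<omega>\<bar> \<le> \<bar>(\<bar>B1 n \<omega>\<bar> + \<bar>B2 n \<omega>\<bar>) * ((1 / (1 - \<beta>)) * (th n \<omega> - q))\<bar>) sequentially"
    proof (rule eventually_sequentiallyI[of 1], rule AE_I2)
      fix n :: nat and \<omega> assume n: "1 \<le> n"
      have k: "0 < 1 - \<beta>" using beta by simp
      have "\<bar>(\<bar>B1 n \<omega>\<bar> + \<bar>B2 n \<omega>\<bar>) * ((1 / (1 - \<beta>)) * (th n \<omega> - q))\<bar>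
          = \<bar>th n \<omega> - q\<bar> * ((\<bar>B1 n \<omega>\<bar> + \<bar>B2 n \<omega>\<bar>) / (1 - \<beta>))"
        using k by (simp add: abs_mult)
      then show "\<bar>Dn n \<omega>\<bar> \<le> \<bar>(\<bar>B1 n \<omega>\<bar> + \<bar>B2 n \<omega>\<bar>) * ((1 / (1 - \<beta>)) * (th n \<omega> - q))\<bar>"
        using Dn_bound[OF n, of \<omega>] by simp
    qed
  qed simp
qed

end

context cvar_setup
begin

definition sig :: real where "sig = sqrt v / (1 - \<beta>)"
definition Sg :: "nat \<Rightarrow> 's \<Rightarrow> real" where "Sg n \<omega> = sqrt (sigma2_hat \<beta> (\<lambda>i. X i \<omega>) n)"
definition dl :: "nat \<Rightarrow> 's \<Rightarrow> real" where "dl n \<omega> = th n \<omega> - q"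
definition s1 :: "nat \<Rightarrow> 's \<Rightarrow> real" where "s1 n \<omega> = (\<Sum>i<n. (Yf (X i \<omega>) - m)) / real n"
definition s2 :: "nat \<Rightarrow> 's \<Rightarrow> real" where "s2 n \<omega> = (\<Sum>i<n. ((Yf (X i \<omega>))\<^sup>2 - (v + m\<^sup>2))) / real n"
definition L :: real where "L = max b q - max a q"
definition Hs :: "nat \<Rightarrow> 's \<Rightarrow> real" where
  "Hs n \<omega> = (1 / ((1 - \<beta>)\<^sup>2 * sig)) * ((((((8 * L) * \<bar>dl n \<omega>\<bar> + 8 * (\<bar>dl n \<omega>\<bar> * \<bar>dl n \<omega>\<bar>))
      + 2 * \<bar>s2 n \<omega>\<bar>) + 2 * (\<bar>s1 n \<omega>\<bar> * \<bar>s1 n \<omega>\<bar>)) + (4 * \<bar>m\<bar>) * \<bar>s1 n \<omega>\<bar>) + 2 * \<bar>v\<bar> / real n)"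

lemma sig_pos: "0 < sig" unfolding sig_def using v_pos beta by simp

lemma sig2_eq: "sigma2_hat \<beta> (\<lambda>i. X i \<omega>) n = sample_var (\<lambda>i. max (X i \<omega>) (th n \<omega>)) n / (1 - \<beta>)\<^sup>2"
  by (simp add: sigma2_hat_def th_def kk_def)

lemma Sg_meas[measurable]: "Sg n \<in> borel_measurable M"
  unfolding Sg_def sig2_eq sample_var_def by measurable
lemma dl_meas[measurable]: "dl n \<in> borel_measurable M" unfolding dl_def by measurable
lemma s1_meas[measurable]: "s1 n \<in> borel_measurable M" unfolding s1_def by measurable
lemma s2_meas[measurable]: "s2 n \<in> borel_measurable M" unfolding s2_def by measurable
lemma Hs_meas[measurable]: "Hs n \<in> borel_measurable M" unfolding Hs_def by measurable

lemma Sg_bound: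
  assumes n: "2 \<le> n" and X: "\<forall>i. X i \<omega> \<in> {a..b}"
  shows "\<bar>Sg n \<omega> - sig\<bar> \<le> Hs n \<omega>"
proof -
  let ?W = "\<lambda>i. max (X i \<omega>) (th n \<omega>)"
  let ?Y = "\<lambda>i. Yf (X i \<omega>)"
  have k: "0 < 1 - \<beta>" using beta by simp
  have uq: "(\<lambda>i. q + ?Y i) = (\<lambda>i. max (X i \<omega>) q)" by (auto simp: Yf_def max_def)
  have lip: "\<bar>sample_var ?W n - sample_var (\<lambda>i. q + ?Y i) n\<bar> \<le> 8 * (max b q - max a q) * \<bar>dl n \<omega>\<bar> + 8 * \<bar>dl n \<omega>\<bar> * \<bar>dl n \<omega>\<bar>"
  proof (rule sv_lip[OF n])
    fix i assume "i < n"
    show "\<bar>?W i - (q + ?Y i)\<bar> \<le> \<bar>dl n \<omega>\<bar>" unfolding dl_def Yf_def by (auto simp: max_def abs_if)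
    show "q + ?Y i \<in> {max a q..max b q}" using X[rule_format, of i] by (auto simp: Yf_def max_def)
  qed
  have dev: "\<bar>sample_var ?Y n - v\<bar> \<le> 2 * (\<bar>s2 n \<omega>\<bar> + \<bar>s1 n \<omega>\<bar> * \<bar>s1 n \<omega>\<bar> + 2 * \<bar>m\<bar> * \<bar>s1 n \<omega>\<bar>) + 2 * \<bar>v\<bar> / real n"
    using sv_dev[where y="\<lambda>i. Yf (X i \<omega>)" and m=m and v=v, OF n] unfolding s1_def s2_def .
  have sh: "sample_var (\<lambda>i. q + ?Y i) n = sample_var ?Y n" by (rule sv_shift)
  define K where "K = (((((8 * L) * \<bar>dl n \<omega>\<bar> + 8 * (\<bar>dl n \<omega>\<bar> * \<bar>dl n \<omega>\<bar>))
      + 2 * \<bar>s2 n \<omega>\<bar>) + 2 * (\<bar>s1 n \<omega>\<bar> * \<bar>s1 n \<omega>\<bar>)) + (4 * \<bar>m\<bar>) * \<bar>s1 n \<omega>\<bar>) + 2 * \<bar>v\<bar> / real n"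
  have SW: "\<bar>sample_var ?W n - v\<bar> \<le> K"
    using lip dev unfolding sh K_def L_def by (simp add: algebra_simps) linarith
  have x0: "0 \<le> sample_var ?W n / (1 - \<beta>)\<^sup>2" by (simp add: sv_nonneg)
  have sig2: "sig\<^sup>2 = v / (1 - \<beta>)\<^sup>2" unfolding sig_def using v_pos by (simp add: power_divide)
  have "\<bar>Sg n \<omega> - sig\<bar> \<le> \<bar>sample_var ?W n / (1 - \<beta>)\<^sup>2 - sig\<^sup>2\<bar> / sig"
    unfolding Sg_def sig2_eq by (rule sqrt_dev[OF x0 sig_pos])
  also have "\<bar>sample_var ?W n / (1 - \<beta>)\<^sup>2 - sig\<^sup>2\<bar> = \<bar>sample_var ?W n - v\<bar> / (1 - \<beta>)\<^sup>2"
    unfolding sig2 using k by (simp add: diff_divide_distrib[symmetric] abs_divide)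
  also have "\<bar>sample_var ?W n - v\<bar> / (1 - \<beta>)\<^sup>2 / sig \<le> K / (1 - \<beta>)\<^sup>2 / sig"
    using SW k sig_pos by (intro divide_right_mono) auto
  also have "\<dots> = Hs n \<omega>" unfolding Hs_def K_def by simp
  finally show ?thesis .
qed

lemma cip_sum_pieces: "cip M Hs"
proof -
  have cdl: "cip M (\<lambda>n \<omega>. \<bar>dl n \<omega>\<bar>)" using cip_abs[OF th_cip] unfolding dl_def[abs_def] .
  have cs1: "cip M (\<lambda>n \<omega>. \<bar>s1 n \<omega>\<bar>)"
    using cip_abs[OF dev_cip[OF Yf_meas centered[OF Yf_meas Yf_bound]]] unfolding m_eq s1_def[abs_def] .
  have cs2: "cip M (\<lambda>n \<omega>. \<bar>s2 n \<omega>\<bar>)"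
  proof -
    have "integral\<^sup>L \<mu> (\<lambda>x. (Yf x)\<^sup>2) = v + m\<^sup>2" using v_eq by simp
    then show ?thesis
      using cip_abs[OF dev_cip[OF _ centered[OF _ Yf2_bound]]] unfolding s2_def[abs_def] by simp
  qed
  have c1: "cip M (\<lambda>n \<omega>. (8 * L) * \<bar>dl n \<omega>\<bar>)" by (rule cip_cmult[OF cdl])
  have c2: "cip M (\<lambda>n \<omega>. 8 * (\<bar>dl n \<omega>\<bar> * \<bar>dl n \<omega>\<bar>))"
    by (rule cip_cmult, rule cip_mult[OF _ _ cip_bip[OF cdl] cdl]) auto
  have c3: "cip M (\<lambda>n \<omega>. 2 * \<bar>s2 n \<omega>\<bar>)" by (rule cip_cmult[OF cs2])
  have c4: "cip M (\<lambda>n \<omega>. 2 * (\<bar>s1 n \<omega>\<bar> * \<bar>s1 n \<omega>\<bar>))"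
    by (rule cip_cmult, rule cip_mult[OF _ _ cip_bip[OF cs1] cs1]) auto
  have c5: "cip M (\<lambda>n \<omega>. (4 * \<bar>m\<bar>) * \<bar>s1 n \<omega>\<bar>)" by (rule cip_cmult[OF cs1])
  have c6: "cip M (\<lambda>n \<omega>. 2 * \<bar>v\<bar> / real n)"
  proof (rule cip_det)
    have "(\<lambda>n. 2 * \<bar>v\<bar> * (1 / real n)) \<longlonglongrightarrow> 2 * \<bar>v\<bar> * 0"
      by (intro tendsto_intros lim_inverse_n')
    then show "(\<lambda>n. 2 * \<bar>v\<bar> / real n) \<longlonglongrightarrow> 0" by simp
  qed
  have a1: "cip M (\<lambda>n \<omega>. (8 * L) * \<bar>dl n \<omega>\<bar> + 8 * (\<bar>dl n \<omega>\<bar> * \<bar>dl n \<omega>\<bar>))"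
    by (rule cip_add[OF _ _ c1 c2]) auto
  have a2: "cip M (\<lambda>n \<omega>. ((8 * L) * \<bar>dl n \<omega>\<bar> + 8 * (\<bar>dl n \<omega>\<bar> * \<bar>dl n \<omega>\<bar>)) + 2 * \<bar>s2 n \<omega>\<bar>)"
    by (rule cip_add[OF _ _ a1 c3]) auto
  have a3: "cip M (\<lambda>n \<omega>. (((8 * L) * \<bar>dl n \<omega>\<bar> + 8 * (\<bar>dl n \<omega>\<bar> * \<bar>dl n \<omega>\<bar>)) + 2 * \<bar>s2 n \<omega>\<bar>) + 2 * (\<bar>s1 n \<omega>\<bar> * \<bar>s1 n \<omega>\<bar>))"
    by (rule cip_add[OF _ _ a2 c4]) auto
  have a4: "cip M (\<lambda>n \<omega>. ((((8 * L) * \<bar>dl n \<omega>\<bar> + 8 * (\<bar>dl n \<omega>\<bar> * \<bar>dl n \<omega>\<bar>)) + 2 * \<bar>s2 n \<omega>\<bar>) + 2 * (\<bar>s1 n \<omega>\<bar> * \<bar>s1 n \<omega>\<bar>)) + (4 * \<bar>m\<bar>) * \<bar>s1 n \<omega>\<bar>)"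
    by (rule cip_add[OF _ _ a3 c5]) auto
  have a5: "cip M (\<lambda>n \<omega>. (((((8 * L) * \<bar>dl n \<omega>\<bar> + 8 * (\<bar>dl n \<omega>\<bar> * \<bar>dl n \<omega>\<bar>)) + 2 * \<bar>s2 n \<omega>\<bar>) + 2 * (\<bar>s1 n \<omega>\<bar> * \<bar>s1 n \<omega>\<bar>)) + (4 * \<bar>m\<bar>) * \<bar>s1 n \<omega>\<bar>) + 2 * \<bar>v\<bar> / real n)"
    by (rule cip_add[OF _ _ a4 c6]) auto
  show ?thesis unfolding Hs_def[abs_def] by (rule cip_cmult[OF a5])
qed

lemma S_cip: "cip M (\<lambda>n \<omega>. Sg n \<omega> - sig)"
proof (rule cip_dom[OF _ _ cip_sum_pieces])
  show "eventually (\<lambda>n. AE \<omega> in M. \<bar>Sg n \<omega> - sig\<bar> \<le> \<bar>Hs n \<omega>\<bar>) sequentially"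
  proof (rule eventually_sequentiallyI[of 2])
    fix n :: nat assume n: "2 \<le> n"
    show "AE \<omega> in M. \<bar>Sg n \<omega> - sig\<bar> \<le> \<bar>Hs n \<omega>\<bar>"
      using AE_Xall by eventually_elim (use Sg_bound[OF n] in force)
  qed
qed simp

definition T :: "nat \<Rightarrow> 's \<Rightarrow> real" where
  "T n \<omega> = sqrt (real n) * (R_hat (psi_cvar \<beta>) (\<lambda>i. X i \<omega>) n - CVaR \<beta> F) / sqrt (sigma2_hat \<beta> (\<lambda>i. X i \<omega>) n)"

lemma T_alt:
  assumes n: "1 \<le> n"
  shows "T n \<omega> = (Ap n \<omega> / (1 - \<beta>) - Dn n \<omega>) / Sg n \<omega>"
proof -
  have k: "0 < 1 - \<beta>" using beta by simp
  have sp: "0 < sqrt (real n)" using n by simp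
  have ss: "sqrt (real n) * sqrt (real n) = real n" by simp
  have npos: "0 < real n" using n by simp
  have R: "R_hat (psi_cvar \<beta>) (\<lambda>i. X i \<omega>) n = Gn n \<omega> (th n \<omega>)"
    using rhat_eq[OF beta n, of "\<lambda>i. X i \<omega>"] unfolding Gn_def th_def kk_def by simp
  have sY: "(\<Sum>i<n. max (X i \<omega> - q) 0) - real n * m = (\<Sum>i<n. (Yf (X i \<omega>) - m))"
    by (simp add: Yf_def sum_subtractf)
  have a1: "(1 / (real n * (1 - \<beta>))) * (real n * m) = m / (1 - \<beta>)" using npos by simp
  have "Gn n \<omega> q - (q + m / (1 - \<beta>)) = (1 / (real n * (1 - \<beta>))) * (\<Sum>i<n. max (X i \<omega> - q) 0)
      - (1 / (real n * (1 - \<beta>))) * (real n * m)" unfolding Gn_def a1 by simp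
  also have "\<dots> = (1 / (real n * (1 - \<beta>))) * ((\<Sum>i<n. max (X i \<omega> - q) 0) - real n * m)"
    by (simp only: right_diff_distrib)
  finally have "Gn n \<omega> q - (q + m / (1 - \<beta>)) = (1 / (real n * (1 - \<beta>))) * (\<Sum>i<n. (Yf (X i \<omega>) - m))"
    unfolding sY .
  then have "sqrt (real n) * (Gn n \<omega> q - (q + m / (1 - \<beta>))) = Ap n \<omega> / (1 - \<beta>)"
    using sf_alg2[OF sp k, of "\<Sum>i<n. (Yf (X i \<omega>) - m)"] unfolding ss Ap_def by simp
  then have "sqrt (real n) * (R_hat (psi_cvar \<beta>) (\<lambda>i. X i \<omega>) n - CVaR \<beta> F) = Ap n \<omega> / (1 - \<beta>) - Dn n \<omega>"
    unfolding R CVaR_eq Dn_def by (simp add: algebra_simps)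
  then show ?thesis unfolding T_def Sg_def by simp
qed

lemma T_meas[measurable]: "T n \<in> borel_measurable M"
proof (cases "n = 0")
  case True
  then have "T n = (\<lambda>\<omega>. 0)" by (simp add: T_def fun_eq_iff)
  then show ?thesis by simp
next
  case False
  then have "T n = (\<lambda>\<omega>. (Ap n \<omega> / (1 - \<beta>) - Dn n \<omega>) / Sg n \<omega>)" using T_alt by (auto simp: fun_eq_iff)
  then show ?thesis by simp
qed

lemma Z_alt: "Z n \<omega> = Ap n \<omega> / sqrt v"
  unfolding Z_def Ap_def using v_pos by (simp add: real_sqrt_mult sum_subtractf)

lemma TZ_cip: "cip M (\<lambda>n \<omega>. T n \<omega> - Z n \<omega>)"
proof (rule cip_cover3[OF _ _ _ S_cip cip_mult[OF _ _ Ap_bip S_cip] Dn_cip])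
  fix e :: real assume e: "0 < e"
  have k: "0 < 1 - \<beta>" using beta by simp
  have sp: "0 < sig" by (rule sig_pos)
  define e2 where "e2 = e * (1 - \<beta>) * sig\<^sup>2 / 8"
  define e3 where "e3 = e * sig / 8"
  have e2p: "0 < e2" unfolding e2_def using e k sp by simp
  have e3p: "0 < e3" unfolding e3_def using e sp by simp
  have "eventually (\<lambda>n. \<forall>\<omega>\<in>space M. e < \<bar>T n \<omega> - Z n \<omega>\<bar> \<longrightarrow>
      sig / 2 < \<bar>Sg n \<omega> - sig\<bar> \<or> e2 < \<bar>Ap n \<omega> * (Sg n \<omega> - sig)\<bar> \<or> e3 < \<bar>Dn n \<omega>\<bar>) sequentially"
  proof (rule eventually_sequentiallyI[of 1], intro ballI impI)
    fix n :: nat and \<omega> assume n: "1 \<le> n" and "\<omega> \<in> space M" and lt: "e < \<bar>T n \<omega> - Z n \<omega>\<bar>"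
    show "sig / 2 < \<bar>Sg n \<omega> - sig\<bar> \<or> e2 < \<bar>Ap n \<omega> * (Sg n \<omega> - sig)\<bar> \<or> e3 < \<bar>Dn n \<omega>\<bar>"
    proof (rule ccontr)
      assume "\<not> ?thesis"
      then have h1: "\<bar>Sg n \<omega> - sig\<bar> \<le> sig / 2" and h2: "\<bar>Ap n \<omega> * (Sg n \<omega> - sig)\<bar> \<le> e * (1 - \<beta>) * sig\<^sup>2 / 8"
        and h3: "\<bar>Dn n \<omega>\<bar> \<le> e * sig / 8" unfolding e2_def e3_def by auto
      have Zs: "Z n \<omega> = (Ap n \<omega> / (1 - \<beta>)) / sig"
        unfolding Z_alt sig_def using k by simp
      have "\<bar>T n \<omega> - Z n \<omega>\<bar> \<le> e / 2"
        unfolding T_alt[OF n] Zs by (rule final_alg[OF k sp e h1 h2 h3])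
      then show False using lt e by simp
    qed
  qed
  then show "\<exists>e1>0. \<exists>e2>0. \<exists>e3>0. eventually (\<lambda>n. \<forall>\<omega>\<in>space M. e < \<bar>T n \<omega> - Z n \<omega>\<bar> \<longrightarrow>
      e1 < \<bar>Sg n \<omega> - sig\<bar> \<or> e2 < \<bar>Ap n \<omega> * (Sg n \<omega> - sig)\<bar> \<or> e3 < \<bar>Dn n \<omega>\<bar>) sequentially"
    using sp e2p e3p by (intro exI[of _ "sig/2"] exI[of _ e2] exI[of _ e3]) auto
qed auto

lemma main: "weak_conv_m (\<lambda>n. distr M borel (T n)) std_normal_distribution"
  by (rule slutsky[OF Z_meas T_meas Z_clt TZ_cip])

end

theorem corollary1:
  fixes M :: "'s measure" and X :: "nat \<Rightarrow> 's \<Rightarrow> real"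
    and \<beta> a b :: real
  assumes "prob_space M"
    and beta: "0 < \<beta>" "\<beta> < 1"
    and meas: "\<And>i. X i \<in> borel_measurable M"
    and indep: "prob_space.indep_vars M (\<lambda>_. borel) X UNIV"
    and ident: "\<And>i. distr M borel (X i) = distr M borel (X 0)"
    and ab: "a < b" "AE \<omega> in M. X 0 \<omega> \<in> {a..b}"
    and cont: "continuous_on UNIV (cdf (distr M borel (X 0)))"
    and strict: "strict_mono_on {x. 0 < cdf (distr M borel (X 0)) x \<and> cdf (distr M borel (X 0)) x < 1}
                   (cdf (distr M borel (X 0)))"
  shows "weak_conv_m
    (\<lambda>n. distr M borel (\<lambda>\<omega>.
        sqrt (real n) * (R_hat (psi_cvar \<beta>) (\<lambda>i. X i \<omega>) n - CVaR \<beta> (cdf (distr M borel (X 0))))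
        / sqrt (sigma2_hat \<beta> (\<lambda>i. X i \<omega>) n)))
    std_normal_distribution"
proof -
  interpret cvar_setup M X \<beta> a b
    by (rule cvar_setup.intro[OF assms(1)], unfold_locales) (use assms in auto)
  show ?thesis using main unfolding T_def[abs_def] .
qed

end
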